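(* Let $n>2$ be an integer, $p_1,\dots,p_n$ distinct primes, and $(X,r)$ an indecomposable multipermutation solution of the YBE with $|X|=p_1\cdots p_n$ and multipermutation level $n$. Then $|\mathcal G(X,r)|>p_1\cdots p_n$.
   Context: A solution of the Yang–Baxter equation (YBE) is a pair $(X,r)$, where $X$ is a non-empty set and $r\colon X\times X\to X\times X$, written $r(x,y)=(\sigma_x(y),\gamma_y(x))$, satisfies: $r^2=\mathrm{id}$; all $\sigma_x,\gamma_y$ are bijections of $X$; and $r_{12}r_{23}r_{12}=r_{23}r_{12}r_{23}$ on $X^3$, where $r_{12}=r\times\mathrm{id}_X$, $r_{23}=\mathrm{id}_X\times r$. $\mathcal G(X,r)=\langle\sigma_x:x\in X\rangle\le\mathrm{Sym}_X$; $(X,r)$ is indecomposable if $\mathcal G(X,r)$ is transitive on $X$. Retract: $x\sim y\iff\sigma_x=\sigma_y$, inducing a solution $\mathrm{Ret}(X,r)$ on $X/{\sim}$; $\mathrm{Ret}^k$ is the $k$-fold iterate; $(X,r)$ is multipermutation if $|\mathrm{Ret}^k(X,r)|=1$ for some $k\ge1$, the least such $k$ being its multipermutation level. *)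

theory Defs
  imports "HOL-Algebra.Bij" "HOL-Algebra.Generated_Groups" "HOL-Computational_Algebra.Primes"
begin

definition ybe_sigma :: "('a \<times> 'a \<Rightarrow> 'a \<times> 'a) \<Rightarrow> 'a \<Rightarrow> 'a \<Rightarrow> 'a" where
  "ybe_sigma r x y = fst (r (x, y))"

definition ybe_gamma :: "('a \<times> 'a \<Rightarrow> 'a \<times> 'a) \<Rightarrow> 'a \<Rightarrow> 'a \<Rightarrow> 'a" where
  "ybe_gamma r y x = snd (r (x, y))"

definition ybe_solution :: "'a set \<Rightarrow> ('a \<times> 'a \<Rightarrow> 'a \<times> 'a) \<Rightarrow> bool" where
  "ybe_solution X r \<longleftrightarrow>
     X \<noteq> {} \<and>
     (\<forall>x\<in>X. \<forall>y\<in>X. r (x, y) \<in> X \<times> X) \<and>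
     (\<forall>x\<in>X. \<forall>y\<in>X. r (r (x, y)) = (x, y)) \<and>
     (\<forall>x\<in>X. bij_betw (ybe_sigma r x) X X) \<and>
     (\<forall>y\<in>X. bij_betw (ybe_gamma r y) X X) \<and>
     (\<forall>x\<in>X. \<forall>y\<in>X. \<forall>z\<in>X.
        (let r12 = (\<lambda>(a, b, c). (fst (r (a, b)), snd (r (a, b)), c));
             r23 = (\<lambda>(a, b, c). (a, fst (r (b, c)), snd (r (b, c))))
         in r12 (r23 (r12 (x, y, z))) = r23 (r12 (r23 (x, y, z)))))"

text \<open>The permutation group G(X,r) = < sigma_x : x in X > inside Sym_X
  (bijections of X, taken extensional, as in HOL-Algebra's BijGroup).\<close>

definition ybe_group :: "'a set \<Rightarrow> ('a \<times> 'a \<Rightarrow> 'a \<times> 'a) \<Rightarrow> ('a \<Rightarrow> 'a) set" where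
  "ybe_group X r = generate (BijGroup X) ((\<lambda>x. restrict (ybe_sigma r x) X) ` X)"

definition ybe_indecomposable :: "'a set \<Rightarrow> ('a \<times> 'a \<Rightarrow> 'a \<times> 'a) \<Rightarrow> bool" where
  "ybe_indecomposable X r \<longleftrightarrow> (\<forall>x\<in>X. \<forall>y\<in>X. \<exists>g\<in>ybe_group X r. g x = y)"

text \<open>Iterated retraction, pulled back to X: ret_rel X r k is the equivalence relation on X
  whose classes are the elements of Ret^k(X,r).\<close>

fun ret_rel :: "'a set \<Rightarrow> ('a \<times> 'a \<Rightarrow> 'a \<times> 'a) \<Rightarrow> nat \<Rightarrow> ('a \<times> 'a) set" where
  "ret_rel X r 0 = Id_on X"
| "ret_rel X r (Suc k) =
     {(x, y). x \<in> X \<and> y \<in> X \<and> (\<forall>z\<in>X. (ybe_sigma r x z, ybe_sigma r y z) \<in> ret_rel X r k)}"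

definition ret_card :: "'a set \<Rightarrow> ('a \<times> 'a \<Rightarrow> 'a \<times> 'a) \<Rightarrow> nat \<Rightarrow> nat" where
  "ret_card X r k = card (X // ret_rel X r k)"

definition mp_level :: "'a set \<Rightarrow> ('a \<times> 'a \<Rightarrow> 'a \<times> 'a) \<Rightarrow> nat \<Rightarrow> bool" where
  "mp_level X r m \<longleftrightarrow> m \<ge> 1 \<and> ret_card X r m = 1 \<and> (\<forall>k. 1 \<le> k \<and> k < m \<longrightarrow> ret_card X r k \<noteq> 1)"

definition multipermutation :: "'a set \<Rightarrow> ('a \<times> 'a \<Rightarrow> 'a \<times> 'a) \<Rightarrow> bool" where
  "multipermutation X r \<longleftrightarrow> (\<exists>k\<ge>1. ret_card X r k = 1)"

end

theory Submission
  imports Defs "HOL-Algebra.Multiplicative_Group" "HOL-Computational_Algebra.Squarefree" "HOL-Computational_Algebra.Primes"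
begin

context group begin

lemma inv_cancel_left1 [simp]:
  "x \<in> carrier G \<Longrightarrow> y \<in> carrier G \<Longrightarrow> inv x \<otimes> (x \<otimes> y) = y"
  by (simp add: m_assoc[symmetric])

lemma inv_cancel_left2 [simp]:
  "x \<in> carrier G \<Longrightarrow> y \<in> carrier G \<Longrightarrow> x \<otimes> (inv x \<otimes> y) = y"
  by (simp add: m_assoc[symmetric])

lemma cos_eq_iff:
  assumes "N \<lhd> G" "x \<in> carrier G" "y \<in> carrier G"
  shows "(N #> x = N #> y) \<longleftrightarrow> x \<otimes> inv y \<in> N"
proof -
  interpret N: normal N G by fact
  have sg: "subgroup N G" by (rule N.subgroup_axioms)
  show ?thesis
  proof
    assume "N #> x = N #> y"
    then have "x \<in> N #> y" using repr_independenceD[OF sg assms(2), of y] by simp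
    then show "x \<otimes> inv y \<in> N" using N.rcos_module_imp[OF is_group assms(3)] by blast
  next
    assume "x \<otimes> inv y \<in> N"
    then have "x \<in> N #> y" by (rule N.rcos_module_rev[OF is_group assms(3,2)])
    then show "N #> x = N #> y" using repr_independence[OF _ assms(3) sg] by simp
  qed
qed

lemma cos_eq_iff2:
  assumes "N \<lhd> G" "x \<in> carrier G" "y \<in> carrier G"
  shows "(N #> x = N #> y) \<longleftrightarrow> inv x \<otimes> y \<in> N"
proof -
  interpret N: normal N G by fact
  have "inv x \<otimes> y \<in> N \<longleftrightarrow> x \<otimes> (inv x \<otimes> y) \<otimes> inv x \<in> N"
  proof
    assume "inv x \<otimes> y \<in> N" then show "x \<otimes> (inv x \<otimes> y) \<otimes> inv x \<in> N"
      using N.inv_op_closed2[of x "inv x \<otimes> y"] assms by simp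
  next
    assume "x \<otimes> (inv x \<otimes> y) \<otimes> inv x \<in> N"
    then have "inv x \<otimes> (x \<otimes> (inv x \<otimes> y) \<otimes> inv x) \<otimes> x \<in> N"
      using N.inv_op_closed1[of x "x \<otimes> (inv x \<otimes> y) \<otimes> inv x"] assms by simp
    moreover have "inv x \<otimes> (x \<otimes> (inv x \<otimes> y) \<otimes> inv x) \<otimes> x = inv x \<otimes> y"
      using assms by (metis inv_closed m_assoc r_inv l_inv l_one r_one m_closed)
    ultimately show "inv x \<otimes> y \<in> N" by simp
  qed
  also have "x \<otimes> (inv x \<otimes> y) \<otimes> inv x = y \<otimes> inv x" using assms
    by (simp add: m_assoc[symmetric])
  also have "y \<otimes> inv x \<in> N \<longleftrightarrow> (N #> y = N #> x)" using cos_eq_iff assms by simp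
  finally show ?thesis by auto
qed

lemma cos_hom:
  assumes "N \<lhd> G"
  shows "group_hom G (G Mod N) (\<lambda>x. N #> x)"
proof -
  interpret N: normal N G by fact
  show ?thesis
    unfolding group_hom_def group_hom_axioms_def
    using N.factorgroup_is_group N.r_coset_hom_Mod is_group by auto
qed

lemma cos_one_iff:
  assumes "N \<lhd> G" "x \<in> carrier G"
  shows "(N #> x = N) \<longleftrightarrow> x \<in> N"
proof -
  interpret N: normal N G by fact
  have "N #> \<one> = N" using N.subgroup_axioms coset_join2 by auto
  then show ?thesis using cos_eq_iff[OF assms(1,2) one_closed] assms by simp
qed

lemma subgroup_pow_mem:
  assumes "subgroup N G" "x \<in> N"
  shows "x [^] (n::nat) \<in> N"
proof (induction n)
  case 0 then show ?case using assms(1) by (simp add: subgroup.one_closed)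
next
  case (Suc n) then show ?case using assms
    by (simp add: subgroup.m_closed subgroup.mem_carrier)
qed

lemma coprime_pow_mem:
  assumes "subgroup N G" "x \<in> carrier G" "coprime a b" "a > 0"
    "x [^] (a::nat) \<in> N" "x [^] (b::nat) \<in> N"
  shows "x \<in> N"
proof -
  interpret N: subgroup N G by fact
  obtain u v where uv: "a * u = b * v + gcd a b" using bezout_nat[of a b] assms(4) by auto
  then have uv1: "a * u = b * v + 1" using assms(3) by simp
  have "x [^] (a*u) = x [^] (b*v) \<otimes> x" using uv1 assms(2)
    by (metis Suc_eq_plus1 nat_pow_Suc)
  then have "x = inv (x [^] (b*v)) \<otimes> x [^] (a*u)" using assms(2)
    by (simp add: inv_solve_left)
  moreover have "x [^] (a*u) \<in> N" using assms(5) assms(2)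
    by (metis subgroup_pow_mem[OF assms(1)] nat_pow_pow)
  moreover have "x [^] (b*v) \<in> N" using assms(6) assms(2)
    by (metis subgroup_pow_mem[OF assms(1)] nat_pow_pow)
  ultimately show ?thesis by (metis N.m_closed N.m_inv_closed)
qed

lemma index_pow:
  assumes "N \<lhd> G" "subgroup H G" "N \<subseteq> H" "finite (carrier G)"
    "card H = d * card N" "x \<in> H"
  shows "x [^] d \<in> N"
proof -
  let ?H = "G\<lparr>carrier := H\<rparr>"
  have nH: "N \<lhd> ?H" using normal_restrict_supergroup assms by blast
  have gH: "group ?H" using subgroup.subgroup_is_group assms(2) is_group by blast
  interpret NH: normal N ?H by (rule nH)
  have finH: "finite H" using assms(2,4) subgroup.subset finite_subset by blast
  have "card (rcosets\<^bsub>?H\<^esub> N) * card N = order ?H"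
    using group.lagrange[OF gH NH.subgroup_axioms] .
  then have "card (rcosets\<^bsub>?H\<^esub> N) * card N = d * card N" using assms(5) by (simp add: order_def)
  moreover have "card N > 0"
  proof -
    have "\<one> \<in> N" using subgroup.one_closed[OF normal_imp_subgroup[OF assms(1)]] .
    then show ?thesis using finH assms(3) by (simp add: card_gt_0_iff finite_subset[OF assms(3) finH]) blast
  qed
  ultimately have cd: "card (rcosets\<^bsub>?H\<^esub> N) = d" by simp
  have gQ: "group (?H Mod N)" by (rule NH.factorgroup_is_group)
  have hom: "group_hom ?H (?H Mod N) (\<lambda>y. N #>\<^bsub>?H\<^esub> y)"
    using group.cos_hom[OF gH nH] .
  have "(N #>\<^bsub>?H\<^esub> x) [^]\<^bsub>?H Mod N\<^esub> order (?H Mod N) = \<one>\<^bsub>?H Mod N\<^esub>"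
    using group.pow_order_eq_1[OF gQ] group_hom.hom_closed[OF hom] assms(6) by simp
  then have "N #>\<^bsub>?H\<^esub> (x [^]\<^bsub>?H\<^esub> d) = N"
    using group_hom.hom_nat_pow[OF hom, of x d] assms(6) cd
    by (simp add: order_def FactGroup_def)
  then have "x [^]\<^bsub>?H\<^esub> d \<in> N"
    using group.cos_one_iff[OF gH nH] assms(6) monoid.nat_pow_closed[OF group.is_monoid[OF gH]]
    by simp
  then show ?thesis by (metis nat_pow_consistent)
qed

end

context group begin

lemma conj_pow:
  assumes "x \<in> carrier G" "y \<in> carrier G"
  shows "x \<otimes> y [^] (j::nat) \<otimes> inv x = (x \<otimes> y \<otimes> inv x) [^] j"
proof (induction j)
  case 0 then show ?case using assms by simp
next
  case (Suc j)
  have "x \<otimes> y [^] Suc j \<otimes> inv x = (x \<otimes> y [^] j \<otimes> inv x) \<otimes> (x \<otimes> y \<otimes> inv x)"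
    using assms by (simp add: m_assoc)
  also have "\<dots> = (x \<otimes> y \<otimes> inv x) [^] Suc j" using Suc by simp
  finally show ?case .
qed

lemma conj_comm_trivial:
  assumes "e \<in> carrier G" "X \<in> carrier G" "Y \<in> carrier G"
    and k1: "X \<otimes> e \<otimes> inv X = e [^] (k1::nat)"
    and k2: "inv X \<otimes> e \<otimes> inv (inv X) = e [^] (k2::nat)"
    and k3: "Y \<otimes> e \<otimes> inv Y = e [^] (k3::nat)"
    and k4: "inv Y \<otimes> e \<otimes> inv (inv Y) = e [^] (k4::nat)"
  shows "(X \<otimes> Y \<otimes> inv X \<otimes> inv Y) \<otimes> e [^] (j::nat) \<otimes> inv (X \<otimes> Y \<otimes> inv X \<otimes> inv Y) = e [^] j"
proof -
  have c: "Z \<otimes> e [^] (a::nat) \<otimes> inv Z = e [^] (k * a)"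
    if "Z \<in> carrier G" "Z \<otimes> e \<otimes> inv Z = e [^] (k::nat)" for Z a k
    using conj_pow[OF that(1) assms(1), of a] that(2) assms(1) by (simp add: nat_pow_pow)
  have e12: "e = e [^] (k1 * k2)"
  proof -
    have "e = X \<otimes> (inv X \<otimes> e \<otimes> inv (inv X)) \<otimes> inv X" using assms(1,2)
      by (simp add: m_assoc)
    also have "\<dots> = e [^] (k1 * k2)" using k2 c[OF assms(2) k1, of k2] by simp
    finally show ?thesis .
  qed
  have e34: "e = e [^] (k3 * k4)"
  proof -
    have "e = Y \<otimes> (inv Y \<otimes> e \<otimes> inv (inv Y)) \<otimes> inv Y" using assms(1,3)
      by (simp add: m_assoc)
    also have "\<dots> = e [^] (k3 * k4)" using k4 c[OF assms(3) k3, of k4] by simp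
    finally show ?thesis .
  qed
  have "(X \<otimes> Y \<otimes> inv X \<otimes> inv Y) \<otimes> e [^] j \<otimes> inv (X \<otimes> Y \<otimes> inv X \<otimes> inv Y)
      = X \<otimes> (Y \<otimes> (inv X \<otimes> (inv Y \<otimes> e [^] j \<otimes> inv (inv Y)) \<otimes> inv (inv X)) \<otimes> inv Y) \<otimes> inv X"
    using assms(1-3) by (simp add: m_assoc inv_mult_group)
  also have "\<dots> = e [^] (k1 * (k3 * (k2 * (k4 * j))))"
    using c[OF inv_closed[OF assms(3)] k4, of j] c[OF inv_closed[OF assms(2)] k2]
      c[OF assms(3) k3] c[OF assms(2) k1] by simp
  also have "\<dots> = ((e [^] (k1 * k2)) [^] (k3 * k4)) [^] j" using assms(1)
    by (simp add: nat_pow_pow mult.commute mult.left_commute)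
  also have "\<dots> = e [^] j" using e12[symmetric] e34[symmetric] by simp
  finally show ?thesis .
qed

lemma cyclic_mod:
  assumes "K \<lhd> G" "subgroup P G" "K \<subseteq> P" "finite (carrier G)" "card P = p * card K" "prime p"
    "a \<in> P" "a \<notin> K" "b \<in> P"
  shows "\<exists>j::nat. K #> b = K #> (a [^] j)"
proof -
  have aG: "a \<in> carrier G" using subgroup.mem_carrier[OF assms(2,7)] .
  have sK: "subgroup K G" using normal_imp_subgroup[OF assms(1)] .
  have ap: "a [^] p \<in> K" using index_pow[OF assms(1-5,7)] .
  define C where "C = (\<lambda>j. K #> (a [^] j)) ` {..<p}"
  have inj: "inj_on (\<lambda>j. K #> (a [^] j)) {..<p}"
  proof (rule inj_onI)
    fix i j assume ij: "i \<in> {..<p}" "j \<in> {..<p}" "K #> (a [^] i) = K #> (a [^] j)"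
    show "i = j"
    proof (rule ccontr)
      assume "i \<noteq> j"
      then obtain u v where uv: "u < v" "v < p" "K #> (a [^] u) = K #> (a [^] v)"
      proof (cases "i < j")
        case True then show ?thesis using that[of i j] ij by auto
      next
        case False then show ?thesis using that[of j i] ij \<open>i \<noteq> j\<close> by auto
      qed
      have "a [^] v \<otimes> inv (a [^] u) \<in> K"
        using cos_eq_iff[OF assms(1)] uv(3)[symmetric] aG by simp
      moreover have "a [^] v = a [^] (v - u) \<otimes> a [^] u"
        using uv(1) aG by (simp add: nat_pow_mult)
      moreover have "a [^] (v - u) \<otimes> a [^] u \<otimes> inv (a [^] u) = a [^] (v - u)"
        using aG by (simp add: m_assoc)
      ultimately have "a [^] (v - u) \<in> K" by simp
      moreover have "coprime (v - u) p"
      proof -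
        have "\<not> p dvd (v - u)" using uv by (auto dest: dvd_imp_le)
        then show ?thesis using prime_imp_coprime[OF assms(6)] coprime_commute by blast
      qed
      ultimately have "a \<in> K" using coprime_pow_mem[OF sK aG _ _ _ ap, of "v - u"] uv by simp
      then show False using assms(8) by simp
    qed
  qed
  then have cC: "card C = p" unfolding C_def by (simp add: card_image)
  define R where "R = rcosets\<^bsub>G\<lparr>carrier := P\<rparr>\<^esub> K"
  have R_eq: "R = (\<lambda>y. K #> y) ` P"
    unfolding R_def RCOSETS_def r_coset_def by auto
  have gP: "group (G\<lparr>carrier := P\<rparr>)" using subgroup.subgroup_is_group[OF assms(2) is_group] .
  have sKP: "subgroup K (G\<lparr>carrier := P\<rparr>)" using subgroup_incl[OF sK assms(2,3)] .
  have finP: "finite P" using finite_subset[OF subgroup.subset[OF assms(2)] assms(4)] .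
  have "card R * card K = card P"
    using group.lagrange[OF gP sKP] unfolding R_def by (simp add: order_def)
  moreover have "card K > 0" using finP assms(3) subgroup.one_closed[OF sK]
    by (simp add: card_gt_0_iff finite_subset[OF assms(3) finP]) blast
  ultimately have cR: "card R = p" using assms(5) by simp
  have "C \<subseteq> R" unfolding C_def R_eq using subgroup_pow_mem[OF assms(2,7)] by auto
  then have "C = R" using card_subset_eq[of R C] cC cR finP R_eq by simp
  moreover have "K #> b \<in> R" using R_eq assms(9) by blast
  ultimately show ?thesis unfolding C_def by blast
qed

end

declare mult_FactGroup[simp del] one_FactGroup[simp del]

context group begin

lemma comm_centr:
  assumes "K \<lhd> G" "P \<lhd> G" "K \<subseteq> P" "finite (carrier G)" "card P = p * card K" "prime p"
    "g \<in> carrier G" "h \<in> carrier G" "b \<in> P"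
  shows "K #> (g \<otimes> h \<otimes> inv g \<otimes> inv h \<otimes> b) = K #> (b \<otimes> (g \<otimes> h \<otimes> inv g \<otimes> inv h))"
proof -
  have sP: "subgroup P G" using normal_imp_subgroup[OF assms(2)] .
  have sK: "subgroup K G" using normal_imp_subgroup[OF assms(1)] .
  have finP: "finite P" using finite_subset[OF subgroup.subset[OF sP] assms(4)] .
  have cK: "card K > 0" using finP assms(3) subgroup.one_closed[OF sK]
    by (simp add: card_gt_0_iff finite_subset[OF assms(3) finP]) blast
  obtain a where a: "a \<in> P" "a \<notin> K"
  proof (rule ccontr)
    assume "\<not> ?thesis"
    then have "P \<subseteq> K" using that by blast
    then have "card P \<le> card K" using card_mono finite_subset[OF assms(3) finP] by blast
    moreover have "p \<ge> 2" using assms(6) prime_ge_2_nat by blast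
    ultimately show False using assms(5) cK by (metis le_antisym less_irrefl mult_le_cancel2 one_le_numeral
        mult_1 not_less_eq_eq numeral_le_one_iff semiring_norm(69) linorder_not_less mult_less_cancel2
        less_le_trans numeral_2_eq_2)
  qed
  have aG: "a \<in> carrier G" using subgroup.mem_carrier[OF sP a(1)] .
  interpret Q: group "G Mod K" using normal.factorgroup_is_group[OF assms(1)] .
  interpret phi: group_hom G "G Mod K" "\<lambda>x. K #> x" using cos_hom[OF assms(1)] .
  define e where "e = K #> a"
  have eQ: "e \<in> carrier (G Mod K)" unfolding e_def using aG by simp
  have kk: "\<exists>k::nat. (K #> u) \<otimes>\<^bsub>G Mod K\<^esub> e \<otimes>\<^bsub>G Mod K\<^esub> inv\<^bsub>G Mod K\<^esub> (K #> u) = e [^]\<^bsub>G Mod K\<^esub> k"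
    if u: "u \<in> carrier G" for u
  proof -
    have "u \<otimes> a \<otimes> inv u \<in> P" using normal.inv_op_closed2[OF assms(2) u a(1)] .
    then obtain j :: nat where j: "K #> (u \<otimes> a \<otimes> inv u) = K #> (a [^] j)"
      using cyclic_mod[OF assms(1) sP assms(3,4,5,6) a] by blast
    have "K #> (u \<otimes> a \<otimes> inv u) = (K #> u) \<otimes>\<^bsub>G Mod K\<^esub> e \<otimes>\<^bsub>G Mod K\<^esub> inv\<^bsub>G Mod K\<^esub> (K #> u)"
      unfolding e_def using u aG by simp
    moreover have "K #> (a [^] j) = e [^]\<^bsub>G Mod K\<^esub> j" unfolding e_def using phi.hom_nat_pow aG by simp
    ultimately show ?thesis using j by metis
  qed
  obtain j :: nat where j: "K #> b = K #> (a [^] j)"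
    using cyclic_mod[OF assms(1) sP assms(3,4,5,6) a assms(9)] by blast
  then have bj: "K #> b = e [^]\<^bsub>G Mod K\<^esub> j" unfolding e_def using phi.hom_nat_pow aG by simp
  obtain k1 :: nat where k1: "(K #> g) \<otimes>\<^bsub>G Mod K\<^esub> e \<otimes>\<^bsub>G Mod K\<^esub> inv\<^bsub>G Mod K\<^esub> (K #> g) = e [^]\<^bsub>G Mod K\<^esub> k1"
    using kk[OF assms(7)] by blast
  obtain k2 :: nat where k2: "(K #> inv g) \<otimes>\<^bsub>G Mod K\<^esub> e \<otimes>\<^bsub>G Mod K\<^esub> inv\<^bsub>G Mod K\<^esub> (K #> inv g) = e [^]\<^bsub>G Mod K\<^esub> k2"
    using kk[OF inv_closed[OF assms(7)]] by blast
  obtain k3 :: nat where k3: "(K #> h) \<otimes>\<^bsub>G Mod K\<^esub> e \<otimes>\<^bsub>G Mod K\<^esub> inv\<^bsub>G Mod K\<^esub> (K #> h) = e [^]\<^bsub>G Mod K\<^esub> k3"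
    using kk[OF assms(8)] by blast
  obtain k4 :: nat where k4: "(K #> inv h) \<otimes>\<^bsub>G Mod K\<^esub> e \<otimes>\<^bsub>G Mod K\<^esub> inv\<^bsub>G Mod K\<^esub> (K #> inv h) = e [^]\<^bsub>G Mod K\<^esub> k4"
    using kk[OF inv_closed[OF assms(8)]] by blast
  define X where "X = K #> g"
  define Y where "Y = K #> h"
  have XQ: "X \<in> carrier (G Mod K)" "Y \<in> carrier (G Mod K)" unfolding X_def Y_def using assms(7,8) by simp_all
  have iX: "K #> inv g = inv\<^bsub>G Mod K\<^esub> X" "K #> inv h = inv\<^bsub>G Mod K\<^esub> Y"
    unfolding X_def Y_def using assms(7,8) by simp_all
  define W where "W = X \<otimes>\<^bsub>G Mod K\<^esub> Y \<otimes>\<^bsub>G Mod K\<^esub> inv\<^bsub>G Mod K\<^esub> X \<otimes>\<^bsub>G Mod K\<^esub> inv\<^bsub>G Mod K\<^esub> Y"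
  have WQ: "W \<in> carrier (G Mod K)" unfolding W_def using XQ by simp
  have conj: "W \<otimes>\<^bsub>G Mod K\<^esub> e [^]\<^bsub>G Mod K\<^esub> j \<otimes>\<^bsub>G Mod K\<^esub> inv\<^bsub>G Mod K\<^esub> W = e [^]\<^bsub>G Mod K\<^esub> j"
    unfolding W_def
    using Q.conj_comm_trivial[OF eQ XQ, of k1 k2 k3 k4 j] k1 k2 k3 k4
    unfolding X_def[symmetric] Y_def[symmetric] iX Q.inv_inv[OF XQ(1)] Q.inv_inv[OF XQ(2)] by simp
  have tQ: "e [^]\<^bsub>G Mod K\<^esub> j \<in> carrier (G Mod K)" using eQ by simp
  have comm: "W \<otimes>\<^bsub>G Mod K\<^esub> e [^]\<^bsub>G Mod K\<^esub> j = e [^]\<^bsub>G Mod K\<^esub> j \<otimes>\<^bsub>G Mod K\<^esub> W"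
  proof -
    have "W \<otimes>\<^bsub>G Mod K\<^esub> e [^]\<^bsub>G Mod K\<^esub> j = (W \<otimes>\<^bsub>G Mod K\<^esub> e [^]\<^bsub>G Mod K\<^esub> j \<otimes>\<^bsub>G Mod K\<^esub> inv\<^bsub>G Mod K\<^esub> W) \<otimes>\<^bsub>G Mod K\<^esub> W"
      using WQ tQ by (simp add: Q.m_assoc)
    then show ?thesis using conj by simp
  qed
  have "K #> (g \<otimes> h \<otimes> inv g \<otimes> inv h) = W" unfolding W_def X_def Y_def using assms(7,8) by simp
  then show ?thesis using comm bj assms(7,8,9) subgroup.mem_carrier[OF sP] by simp
qed

end

declare mult_FactGroup[simp del] one_FactGroup[simp del]

context group begin

lemma cos_lmul:
  assumes "N \<lhd> G" "b \<in> carrier G" "b0 \<in> carrier G" "g \<in> carrier G" "N #> b = N #> b0"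
  shows "N #> (g \<otimes> b) = N #> (g \<otimes> b0)"
proof -
  have "inv b \<otimes> b0 \<in> N" using cos_eq_iff2[OF assms(1-3)] assms(5) by simp
  moreover have "inv (g \<otimes> b) \<otimes> (g \<otimes> b0) = inv b \<otimes> b0" using assms(2-4)
    by (simp add: inv_mult_group m_assoc)
  ultimately show ?thesis using cos_eq_iff2[OF assms(1)] assms(2-4) by simp
qed

lemma cos_rconj:
  assumes "N \<lhd> G" "u \<in> carrier G" "v \<in> carrier G" "x \<in> carrier G" "N #> u = N #> v"
  shows "N #> (inv u \<otimes> x) = N #> (inv v \<otimes> x)"
proof -
  have "u \<otimes> inv v \<in> N" using cos_eq_iff[OF assms(1-3)] assms(5) by simp
  then have "inv x \<otimes> (u \<otimes> inv v) \<otimes> x \<in> N" using normal.inv_op_closed1[OF assms(1)] assms by simp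
  moreover have "inv (inv u \<otimes> x) \<otimes> (inv v \<otimes> x) = inv x \<otimes> (u \<otimes> inv v) \<otimes> x" using assms(2-4)
    by (simp add: inv_mult_group m_assoc)
  ultimately show ?thesis using cos_eq_iff2[OF assms(1)] assms(2-4) by simp
qed

lemma cos_cong:
  assumes "N \<lhd> G" "u \<in> carrier G" "x \<in> carrier G" "y \<in> carrier G" "v \<in> carrier G"
    "N #> x = N #> y"
  shows "N #> (u \<otimes> x \<otimes> v) = N #> (u \<otimes> y \<otimes> v)"
proof -
  interpret phi: group_hom G "G Mod N" "\<lambda>x. N #> x" using cos_hom[OF assms(1)] .
  show ?thesis using assms(2-6) by simp
qed

lemma cos_inv:
  assumes "N \<lhd> G" "x \<in> carrier G" "y \<in> carrier G" "N #> x = N #> y"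
  shows "N #> inv x = N #> inv y"
proof -
  interpret phi: group_hom G "G Mod N" "\<lambda>x. N #> x" using cos_hom[OF assms(1)] .
  show ?thesis using assms(2-4) by simp
qed

lemma cos_self_one:
  assumes "N \<lhd> G"
  shows "N #> \<one> = N"
  using cos_one_iff[OF assms one_closed] subgroup.one_closed[OF normal_imp_subgroup[OF assms]] by simp

lemma cos_mem_transfer:
  assumes "N \<lhd> G" "subgroup M G" "N \<subseteq> M" "x \<in> carrier G" "y \<in> carrier G"
    "N #> x = N #> y" "y \<in> M"
  shows "x \<in> M"
proof -
  have "x \<otimes> inv y \<in> M" using cos_eq_iff[OF assms(1,4,5)] assms(3,6) by auto
  then have "x \<otimes> inv y \<otimes> y \<in> M" using assms(7) subgroup.m_closed[OF assms(2)] by blast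
  then show ?thesis using assms(4,5) by (simp add: m_assoc)
qed

lemma comm_cancel:
  assumes "x \<in> carrier G" "y \<in> carrier G" "z \<in> carrier G" "w \<in> carrier G"
    "x \<otimes> y = z \<otimes> w" "y \<otimes> w = w \<otimes> y"
  shows "x \<otimes> inv w = z \<otimes> inv y"
proof -
  have "w \<otimes> inv y = inv y \<otimes> w"
  proof -
    have "w \<otimes> inv y = inv y \<otimes> (y \<otimes> w) \<otimes> inv y" using assms(1-4) by (simp add: m_assoc)
    also have "\<dots> = inv y \<otimes> (w \<otimes> y) \<otimes> inv y" by (simp only: assms(6))
    also have "\<dots> = inv y \<otimes> w" using assms(1-4) by (simp add: m_assoc)
    finally show ?thesis .
  qed
  have "x = z \<otimes> w \<otimes> inv y" using assms(5) assms(1-4)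
    by (metis inv_solve_right m_closed)
  then have "x \<otimes> inv w = z \<otimes> (w \<otimes> inv y) \<otimes> inv w" using assms by (simp add: m_assoc)
  also have "\<dots> = z \<otimes> inv y" using \<open>w \<otimes> inv y = inv y \<otimes> w\<close> assms by (simp add: m_assoc)
  finally show ?thesis .
qed

lemma comm_from_one:
  assumes "x \<in> carrier G" "y \<in> carrier G" "x \<otimes> y \<otimes> inv x \<otimes> inv y = \<one>"
  shows "x \<otimes> y = y \<otimes> x"
proof -
  have "x \<otimes> y = (x \<otimes> y \<otimes> inv x \<otimes> inv y) \<otimes> (y \<otimes> x)" using assms(1,2) by (simp add: m_assoc)
  then show ?thesis using assms by simp
qed

lemma solve_div:
  assumes "x \<in> carrier G" "y \<in> carrier G" "d = x \<otimes> inv y"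
  shows "y = inv d \<otimes> x"
  using assms by (simp add: inv_mult_group m_assoc)

lemma pow_Suc_left:
  assumes "x \<in> carrier G" "y \<in> carrier G"
  shows "x [^] Suc k \<otimes> y = x \<otimes> (x [^] (k::nat) \<otimes> y)"
  by (subst nat_pow_Suc2[OF assms(1)]) (simp add: m_assoc assms)

lemma div_one_eq:
  assumes "x \<in> carrier G" "y \<in> carrier G" "x \<otimes> inv y = \<one>"
  shows "x = y"
proof -
  have "x = x \<otimes> inv y \<otimes> y" using assms(1,2) by (simp add: m_assoc)
  then show ?thesis using assms by simp
qed

lemma comm_pow:
  assumes "x \<in> carrier G" "y \<in> carrier G" "x \<otimes> y = y \<otimes> x"
  shows "x \<otimes> y [^] (m::nat) = y [^] m \<otimes> x"
proof (induction m)
  case 0 then show ?case using assms by simp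
next
  case (Suc m)
  have "x \<otimes> y [^] Suc m = (x \<otimes> y [^] m) \<otimes> y" using assms by (simp add: m_assoc)
  also have "\<dots> = y [^] m \<otimes> (x \<otimes> y)" using Suc assms by (simp add: m_assoc)
  also have "\<dots> = y [^] Suc m \<otimes> x" using assms by (simp add: m_assoc)
  finally show ?case .
qed

lemma pow_twist:
  assumes "V \<in> carrier G" "B \<in> carrier G" "V \<otimes> B = B \<otimes> V"
  shows "V [^] (m::nat) \<otimes> (inv V \<otimes> B) [^] m = B [^] m"
proof (induction m)
  case 0 then show ?case by simp
next
  case (Suc m)
  have "V [^] Suc m \<otimes> (inv V \<otimes> B) [^] Suc m = V \<otimes> (V [^] m \<otimes> (inv V \<otimes> B) [^] m) \<otimes> (inv V \<otimes> B)"
  proof -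
    have e1: "V [^] Suc m = V \<otimes> V [^] m" using nat_pow_Suc2 assms by simp
    have e2: "(inv V \<otimes> B) [^] Suc m = (inv V \<otimes> B) [^] m \<otimes> (inv V \<otimes> B)" by (rule nat_pow_Suc)
    show ?thesis unfolding e1 e2 using assms by (simp add: m_assoc del: nat_pow_Suc)
  qed
  also have "\<dots> = V \<otimes> B [^] m \<otimes> inv V \<otimes> B" using Suc assms by (simp add: m_assoc)
  also have "\<dots> = B [^] m \<otimes> V \<otimes> inv V \<otimes> B" using comm_pow[OF assms] assms by simp
  also have "\<dots> = B [^] Suc m" using assms by (simp add: m_assoc)
  finally show ?case .
qed

end

declare mult_FactGroup[simp del] one_FactGroup[simp del]

context group begin

lemma core_stepN:
  assumes fin: "finite (carrier G)"
    and nP: "P \<lhd> G" and nA: "A \<lhd> G" and PA: "P \<subseteq> A"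
    and cA: "card A = q * card P" and cardG: "card (carrier G) = r * card A"
    and cqr: "coprime q r" and qpos: "q > 0"
    and f: "f \<in> carrier G \<rightarrow> carrier G"
    and h1: "\<And>a b. a \<in> carrier G \<Longrightarrow> b \<in> carrier G \<Longrightarrow>
              f a \<otimes> f (inv (f a) \<otimes> b) = f b \<otimes> f (inv (f b) \<otimes> a)"
    and h3: "\<And>a b. a \<in> carrier G \<Longrightarrow> b \<in> carrier G \<Longrightarrow> (P #> f a = P #> f b) \<longleftrightarrow> (A #> a = A #> b)"
    and h4: "\<And>a b. a \<in> carrier G \<Longrightarrow> b \<in> carrier G \<Longrightarrow> A #> f a = A #> f b"
    and a0: "a0 \<in> carrier G" "f a0 \<notin> A"
  shows "\<exists>a\<in>carrier G. \<exists>b\<in>carrier G. f a \<otimes> f b \<otimes> inv (f a) \<otimes> inv (f b) \<notin> P"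
proof (rule ccontr)
  assume "\<not> ?thesis"
  then have allc: "\<And>a b. a \<in> carrier G \<Longrightarrow> b \<in> carrier G \<Longrightarrow> f a \<otimes> f b \<otimes> inv (f a) \<otimes> inv (f b) \<in> P"
    by blast
  have fG: "\<And>a. a \<in> carrier G \<Longrightarrow> f a \<in> carrier G" using f by blast
  have sP: "subgroup P G" using normal_imp_subgroup[OF nP] .
  have sA: "subgroup A G" using normal_imp_subgroup[OF nA] .
  interpret Q: group "G Mod P" using normal.factorgroup_is_group[OF nP] .
  interpret phi: group_hom G "G Mod P" "\<lambda>x. P #> x" using cos_hom[OF nP] .
  define F where "F a = P #> f a" for a
  have FQ: "\<And>a. a \<in> carrier G \<Longrightarrow> F a \<in> carrier (G Mod P)" unfolding F_def using fG by simp
  have Fcomm: "F a \<otimes>\<^bsub>G Mod P\<^esub> F b = F b \<otimes>\<^bsub>G Mod P\<^esub> F a" if ab: "a \<in> carrier G" "b \<in> carrier G" for a b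
  proof -
    have cm: "f a \<otimes> f b \<otimes> inv (f a) \<otimes> inv (f b) \<in> carrier G" using ab fG by simp
    have "P #> (f a \<otimes> f b \<otimes> inv (f a) \<otimes> inv (f b)) = P"
      using iffD2[OF cos_one_iff[OF nP cm] allc[OF ab]] .
    then have "F a \<otimes>\<^bsub>G Mod P\<^esub> F b \<otimes>\<^bsub>G Mod P\<^esub> inv\<^bsub>G Mod P\<^esub> (F a) \<otimes>\<^bsub>G Mod P\<^esub> inv\<^bsub>G Mod P\<^esub> (F b) = \<one>\<^bsub>G Mod P\<^esub>"
      unfolding F_def using ab fG by (simp add: one_FactGroup)
    then show ?thesis by (rule Q.comm_from_one[OF FQ[OF ab(1)] FQ[OF ab(2)]])
  qed
  define c where "c = f a0"
  have cG: "c \<in> carrier G" unfolding c_def using fG a0 by simp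
  have FA: "\<And>x y. x \<in> carrier G \<Longrightarrow> y \<in> carrier G \<Longrightarrow> A #> x = A #> y \<Longrightarrow> F x = F y"
    unfolding F_def using h3 by blast
  have key: "A #> (inv (f b) \<otimes> a) = A #> (inv c \<otimes> a)" if ab: "a \<in> carrier G" "b \<in> carrier G" for a b
    using cos_rconj[OF nA fG[OF ab(2)] cG ab(1)] h4[OF ab(2) a0(1)] unfolding c_def by simp
  define T where "T a = F (inv c \<otimes> a)" for a
  have TQ: "\<And>a. a \<in> carrier G \<Longrightarrow> T a \<in> carrier (G Mod P)" unfolding T_def using FQ cG by simp
  have eq1: "F a \<otimes>\<^bsub>G Mod P\<^esub> T b = F b \<otimes>\<^bsub>G Mod P\<^esub> T a" if ab: "a \<in> carrier G" "b \<in> carrier G" for a b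
  proof -
    have "P #> (f a \<otimes> f (inv (f a) \<otimes> b)) = P #> (f b \<otimes> f (inv (f b) \<otimes> a))" using h1[OF ab] by simp
    then have "F a \<otimes>\<^bsub>G Mod P\<^esub> F (inv (f a) \<otimes> b) = F b \<otimes>\<^bsub>G Mod P\<^esub> F (inv (f b) \<otimes> a)"
      unfolding F_def using ab fG by simp
    moreover have "F (inv (f a) \<otimes> b) = T b" unfolding T_def
      using FA key[OF ab(2,1)] ab fG cG by simp
    moreover have "F (inv (f b) \<otimes> a) = T a" unfolding T_def
      using FA key[OF ab] ab fG cG by simp
    ultimately show ?thesis by simp
  qed
  have Dconst: "F a \<otimes>\<^bsub>G Mod P\<^esub> inv\<^bsub>G Mod P\<^esub> (T a) = F b \<otimes>\<^bsub>G Mod P\<^esub> inv\<^bsub>G Mod P\<^esub> (T b)"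
    if ab: "a \<in> carrier G" "b \<in> carrier G" for a b
  proof -
    have "T b \<otimes>\<^bsub>G Mod P\<^esub> T a = T a \<otimes>\<^bsub>G Mod P\<^esub> T b" unfolding T_def
      by (rule Fcomm) (use cG ab in simp)+
    then show ?thesis using Q.comm_cancel[OF FQ[OF ab(1)] TQ[OF ab(2)] FQ[OF ab(2)] TQ[OF ab(1)] eq1[OF ab]] by simp
  qed
  define \<delta> where "\<delta> = F a0 \<otimes>\<^bsub>G Mod P\<^esub> inv\<^bsub>G Mod P\<^esub> (T a0)"
  have dQ: "\<delta> \<in> carrier (G Mod P)" unfolding \<delta>_def using FQ TQ a0 by simp
  have Tform: "T a = inv\<^bsub>G Mod P\<^esub> \<delta> \<otimes>\<^bsub>G Mod P\<^esub> F a" if a: "a \<in> carrier G" for a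
  proof -
    have "\<delta> = F a \<otimes>\<^bsub>G Mod P\<^esub> inv\<^bsub>G Mod P\<^esub> (T a)" unfolding \<delta>_def using Dconst[OF a0(1) a] .
    then show ?thesis by (rule Q.solve_div[OF FQ[OF a] TQ[OF a]])
  qed
  have iter: "F (inv c [^] k \<otimes> a) = inv\<^bsub>G Mod P\<^esub> \<delta> [^]\<^bsub>G Mod P\<^esub> (k::nat) \<otimes>\<^bsub>G Mod P\<^esub> F a"
    if a: "a \<in> carrier G" for a k
  proof (induction k)
    case 0 then show ?case using a FQ by simp
  next
    case (Suc k)
    have "inv c [^] Suc k \<otimes> a = inv c \<otimes> (inv c [^] k \<otimes> a)"
      by (rule pow_Suc_left) (use cG a in simp)+
    then have "F (inv c [^] Suc k \<otimes> a) = T (inv c [^] k \<otimes> a)" unfolding T_def by simp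
    also have "\<dots> = inv\<^bsub>G Mod P\<^esub> \<delta> \<otimes>\<^bsub>G Mod P\<^esub> F (inv c [^] k \<otimes> a)" using Tform cG a by simp
    also have "\<dots> = inv\<^bsub>G Mod P\<^esub> \<delta> \<otimes>\<^bsub>G Mod P\<^esub> (inv\<^bsub>G Mod P\<^esub> \<delta> [^]\<^bsub>G Mod P\<^esub> k \<otimes>\<^bsub>G Mod P\<^esub> F a)"
      using Suc by simp
    also have "\<dots> = inv\<^bsub>G Mod P\<^esub> \<delta> [^]\<^bsub>G Mod P\<^esub> Suc k \<otimes>\<^bsub>G Mod P\<^esub> F a"
      by (rule sym, rule Q.pow_Suc_left) (use dQ FQ[OF a] in simp)+
    finally show ?case .
  qed
  have cr: "c [^] r \<in> A"
    using index_pow[OF nA subgroup_self subgroup.subset[OF sA] fin cardG] cG by simp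
  have icr: "inv c [^] r \<in> A" unfolding nat_pow_inv[OF cG] by (rule subgroup.m_inv_closed[OF sA cr])
  have "A #> (inv c [^] r \<otimes> a0) = A #> a0"
  proof -
    have "(inv c [^] r \<otimes> a0) \<otimes> inv a0 = inv c [^] r" using cG a0 by (simp add: m_assoc)
    then show ?thesis using cos_eq_iff[OF nA, of "inv c [^] r \<otimes> a0" a0] icr cG a0 by simp
  qed
  then have "F (inv c [^] r \<otimes> a0) = F a0" by (rule FA[rotated 2]) (use cG a0 in simp)+
  then have "inv\<^bsub>G Mod P\<^esub> \<delta> [^]\<^bsub>G Mod P\<^esub> r \<otimes>\<^bsub>G Mod P\<^esub> F a0 = F a0"
    using iter[OF a0(1), of r] by simp
  then have "inv\<^bsub>G Mod P\<^esub> \<delta> [^]\<^bsub>G Mod P\<^esub> r = \<one>\<^bsub>G Mod P\<^esub>"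
    using FQ[OF a0(1)] dQ by (simp add: Q.r_cancel_one')
  then have dr: "\<delta> [^]\<^bsub>G Mod P\<^esub> r = \<one>\<^bsub>G Mod P\<^esub>"
    using dQ by (simp add: Q.nat_pow_inv[OF dQ])
  define d0 where "d0 = f a0 \<otimes> inv (f (inv c \<otimes> a0))"
  have ica: "inv c \<otimes> a0 \<in> carrier G" using cG a0 by simp
  have d0G: "d0 \<in> carrier G" unfolding d0_def using fG a0 ica by simp
  have d0d: "P #> d0 = \<delta>" unfolding d0_def \<delta>_def F_def T_def using fG a0 ica by simp
  have d0A: "d0 \<in> A" unfolding d0_def using cos_eq_iff[OF nA fG[OF a0(1)] fG[OF ica]] h4[OF a0(1) ica] by simp
  have "P #> (d0 [^] r) = P" using dr d0d d0G by (simp add: one_FactGroup phi.hom_nat_pow)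
  then have d0r: "d0 [^] r \<in> P" using cos_one_iff[OF nP] d0G by simp
  have d0q: "d0 [^] q \<in> P" using index_pow[OF nP sA PA fin cA d0A] .
  have "d0 \<in> P" using coprime_pow_mem[OF sP d0G cqr qpos d0q d0r] .
  then have "\<delta> = \<one>\<^bsub>G Mod P\<^esub>" using d0d cos_one_iff[OF nP d0G] by (simp add: one_FactGroup)
  then have "F a0 = T a0" unfolding \<delta>_def by (rule Q.div_one_eq[OF FQ[OF a0(1)] TQ[OF a0(1)]])
  then have "A #> a0 = A #> (inv c \<otimes> a0)" unfolding F_def T_def using h3[OF a0(1) ica] by simp
  then have "a0 \<otimes> inv (inv c \<otimes> a0) \<in> A" using cos_eq_iff[OF nA a0(1) ica] by simp
  moreover have "a0 \<otimes> inv (inv c \<otimes> a0) = c" using cG a0 by (simp add: inv_mult_group m_assoc)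
  ultimately show False using a0(2) unfolding c_def by simp
qed

end

declare mult_FactGroup[simp del] one_FactGroup[simp del]

context group begin

lemma core:
  assumes fin: "finite (carrier G)"
    and nK: "K \<lhd> G" and nP: "P \<lhd> G" and nA: "A \<lhd> G" and KP: "K \<subseteq> P" and PA: "P \<subseteq> A"
    and cP: "card P = p * card K" and cA: "card A = q * card P" and cardG: "card (carrier G) = r * card A"
    and pp: "prime p" and cpq: "coprime p q" and cqr: "coprime q r" and qpos: "q > 0"
    and f: "f \<in> carrier G \<rightarrow> carrier G"
    and h1: "\<And>a b. a \<in> carrier G \<Longrightarrow> b \<in> carrier G \<Longrightarrow>
              f a \<otimes> f (inv (f a) \<otimes> b) = f b \<otimes> f (inv (f b) \<otimes> a)"
    and h2: "\<And>a b. a \<in> carrier G \<Longrightarrow> b \<in> carrier G \<Longrightarrow> (K #> f a = K #> f b) \<longleftrightarrow> (P #> a = P #> b)"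
    and h3: "\<And>a b. a \<in> carrier G \<Longrightarrow> b \<in> carrier G \<Longrightarrow> (P #> f a = P #> f b) \<longleftrightarrow> (A #> a = A #> b)"
    and h4: "\<And>a b. a \<in> carrier G \<Longrightarrow> b \<in> carrier G \<Longrightarrow> A #> f a = A #> f b"
    and a0: "a0 \<in> carrier G" "f a0 \<notin> A"
  shows False
proof -
  obtain a1 b1 where ab1: "a1 \<in> carrier G" "b1 \<in> carrier G"
      and wnP: "f a1 \<otimes> f b1 \<otimes> inv (f a1) \<otimes> inv (f b1) \<notin> P"
    using core_stepN[OF fin nP nA PA cA cardG cqr qpos f h1 h3 h4 a0] by blast
  have fG: "\<And>a. a \<in> carrier G \<Longrightarrow> f a \<in> carrier G" using f by blast
  have sK: "subgroup K G" using normal_imp_subgroup[OF nK] .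
  have sP: "subgroup P G" using normal_imp_subgroup[OF nP] .
  have sA: "subgroup A G" using normal_imp_subgroup[OF nA] .
  define w where "w = f a1 \<otimes> f b1 \<otimes> inv (f a1) \<otimes> inv (f b1)"
  have wG: "w \<in> carrier G" unfolding w_def using fG ab1 by simp
  have wA: "w \<in> A"
  proof -
    interpret QA: group "G Mod A" using normal.factorgroup_is_group[OF nA] .
    interpret phiA: group_hom G "G Mod A" "\<lambda>x. A #> x" using cos_hom[OF nA] .
    have XQ: "A #> f b1 \<in> carrier (G Mod A)" using fG ab1 by simp
    have "A #> w = (A #> f b1) \<otimes>\<^bsub>G Mod A\<^esub> (A #> f b1) \<otimes>\<^bsub>G Mod A\<^esub> inv\<^bsub>G Mod A\<^esub> (A #> f b1)
               \<otimes>\<^bsub>G Mod A\<^esub> inv\<^bsub>G Mod A\<^esub> (A #> f b1)"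
      unfolding w_def using fG ab1 h4[OF ab1] by simp
    also have "\<dots> = \<one>\<^bsub>G Mod A\<^esub>" using XQ by (simp add: QA.m_assoc)
    finally have "A #> w = A" by (simp add: one_FactGroup)
    then show ?thesis using cos_one_iff[OF nA wG] by simp
  qed
  interpret QK: group "G Mod K" using normal.factorgroup_is_group[OF nK] .
  interpret phiK: group_hom G "G Mod K" "\<lambda>x. K #> x" using cos_hom[OF nK] .
  define Wp where "Wp g \<longleftrightarrow> g \<in> carrier G \<and> (\<forall>b0\<in>carrier G. \<exists>\<rho>\<in>carrier G. \<forall>b\<in>carrier G.
      A #> b = A #> b0 \<longrightarrow> K #> f (g \<otimes> b) = K #> (g \<otimes> f b \<otimes> \<rho>))" for g
  have WpD: "\<exists>\<rho>\<in>carrier G. \<forall>b\<in>carrier G. A #> b = A #> b0 \<longrightarrow> K #> f (g \<otimes> b) = K #> (g \<otimes> f b \<otimes> \<rho>)"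
    if "Wp g" "b0 \<in> carrier G" for g b0
    using that unfolding Wp_def by blast
  have Wp_mult: "Wp (g1 \<otimes> g2)" if W1: "Wp g1" and W2: "Wp g2" for g1 g2
  proof -
    have g1: "g1 \<in> carrier G" and g2: "g2 \<in> carrier G" using W1 W2 unfolding Wp_def by auto
    show ?thesis unfolding Wp_def
    proof (intro conjI ballI)
      show "g1 \<otimes> g2 \<in> carrier G" using g1 g2 by simp
      fix b0 assume b0: "b0 \<in> carrier G"
      obtain \<rho>2 where r2: "\<rho>2 \<in> carrier G" "\<forall>b\<in>carrier G. A #> b = A #> b0 \<longrightarrow>
          K #> f (g2 \<otimes> b) = K #> (g2 \<otimes> f b \<otimes> \<rho>2)"
        using WpD[OF W2 b0] by (elim bexE) 
      obtain \<rho>1 where r1: "\<rho>1 \<in> carrier G" "\<forall>b\<in>carrier G. A #> b = A #> (g2 \<otimes> b0) \<longrightarrow>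
          K #> f (g1 \<otimes> b) = K #> (g1 \<otimes> f b \<otimes> \<rho>1)"
        using WpD[OF W1 m_closed[OF g2 b0]] by (elim bexE)
      show "\<exists>\<rho>\<in>carrier G. \<forall>b\<in>carrier G. A #> b = A #> b0 \<longrightarrow>
          K #> f (g1 \<otimes> g2 \<otimes> b) = K #> (g1 \<otimes> g2 \<otimes> f b \<otimes> \<rho>)"
      proof (intro bexI ballI impI)
        show "\<rho>2 \<otimes> \<rho>1 \<in> carrier G" using r1 r2 by simp
        fix b assume b: "b \<in> carrier G" "A #> b = A #> b0"
        have gb: "A #> (g2 \<otimes> b) = A #> (g2 \<otimes> b0)" using cos_lmul[OF nA b(1) b0 g2 b(2)] .
        have "K #> f (g1 \<otimes> g2 \<otimes> b) = K #> f (g1 \<otimes> (g2 \<otimes> b))" using g1 g2 b by (simp add: m_assoc)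
        also have "\<dots> = K #> (g1 \<otimes> f (g2 \<otimes> b) \<otimes> \<rho>1)" using r1(2) gb g2 b by simp
        also have "\<dots> = K #> (g1 \<otimes> (g2 \<otimes> f b \<otimes> \<rho>2) \<otimes> \<rho>1)"
          using cos_cong[OF nK g1 _ _ r1(1)] r2(2) g2 b fG r2(1) by simp
        also have "\<dots> = K #> (g1 \<otimes> g2 \<otimes> f b \<otimes> (\<rho>2 \<otimes> \<rho>1))"
          using g1 g2 b fG r1(1) r2(1) by (simp add: m_assoc)
        finally show "K #> f (g1 \<otimes> g2 \<otimes> b) = K #> (g1 \<otimes> g2 \<otimes> f b \<otimes> (\<rho>2 \<otimes> \<rho>1))" .
      qed
    qed
  qed
  have Wp_f: "Wp (f x)" if x: "x \<in> carrier G" for x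
    unfolding Wp_def
  proof (intro conjI ballI)
    show "f x \<in> carrier G" using fG x by simp
    fix b0 assume b0: "b0 \<in> carrier G"
    have fxb0: "f x \<otimes> b0 \<in> carrier G" using fG x b0 by simp
    show "\<exists>\<rho>\<in>carrier G. \<forall>b\<in>carrier G. A #> b = A #> b0 \<longrightarrow> K #> f (f x \<otimes> b) = K #> (f x \<otimes> f b \<otimes> \<rho>)"
    proof (intro bexI ballI impI)
      show "inv (f (inv (f (f x \<otimes> b0)) \<otimes> x)) \<in> carrier G" using fG x fxb0 by simp
      fix b assume b: "b \<in> carrier G" "A #> b = A #> b0"
      have fxb: "f x \<otimes> b \<in> carrier G" using fG x b by simp
      define z where "z = f (inv (f (f x \<otimes> b)) \<otimes> x)"
      have zG: "z \<in> carrier G" unfolding z_def using fG x fxb by simp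
      have "f x \<otimes> f (inv (f x) \<otimes> (f x \<otimes> b)) = f (f x \<otimes> b) \<otimes> z"
        unfolding z_def using h1[OF x fxb] .
      then have "f x \<otimes> f b = f (f x \<otimes> b) \<otimes> z" using fG x b by simp
      then have e1: "f (f x \<otimes> b) = f x \<otimes> f b \<otimes> inv z"
        using inv_solve_right[of "f (f x \<otimes> b)" "f x \<otimes> f b" z] fG x b zG fxb by simp
      have "A #> (f x \<otimes> b) = A #> (f x \<otimes> b0)" using cos_lmul[OF nA b(1) b0 fG[OF x] b(2)] .
      then have "P #> f (f x \<otimes> b) = P #> f (f x \<otimes> b0)" using h3[OF fxb fxb0] by simp
      then have "P #> (inv (f (f x \<otimes> b)) \<otimes> x) = P #> (inv (f (f x \<otimes> b0)) \<otimes> x)"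
        using cos_rconj[OF nP fG[OF fxb] fG[OF fxb0] x] by simp
      then have "K #> z = K #> f (inv (f (f x \<otimes> b0)) \<otimes> x)"
        unfolding z_def using h2 fG x fxb fxb0 by simp
      then have "K #> inv z = K #> inv (f (inv (f (f x \<otimes> b0)) \<otimes> x))"
        using cos_inv[OF nK zG] fG x fxb0 by simp
      then have "K #> (f x \<otimes> f b \<otimes> inv z) = K #> (f x \<otimes> f b \<otimes> inv (f (inv (f (f x \<otimes> b0)) \<otimes> x)))"
        using cos_lmul[OF nK _ _ _] fG x b fxb0 zG by simp
      then show "K #> f (f x \<otimes> b) = K #> (f x \<otimes> f b \<otimes> inv (f (inv (f (f x \<otimes> b0)) \<otimes> x)))"
        using e1 by simp
    qed
  qed
  have Wp_finv: "Wp (inv (f x))" if x: "x \<in> carrier G" for x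
    unfolding Wp_def
  proof (intro conjI ballI)
    show "inv (f x) \<in> carrier G" using fG x by simp
    fix b0 assume b0: "b0 \<in> carrier G"
    show "\<exists>\<rho>\<in>carrier G. \<forall>b\<in>carrier G. A #> b = A #> b0 \<longrightarrow>
        K #> f (inv (f x) \<otimes> b) = K #> (inv (f x) \<otimes> f b \<otimes> \<rho>)"
    proof (intro bexI ballI impI)
      show "f (inv (f b0) \<otimes> x) \<in> carrier G" using fG x b0 by simp
      fix b assume b: "b \<in> carrier G" "A #> b = A #> b0"
      have ifxb: "inv (f x) \<otimes> b \<in> carrier G" using fG x b by simp
      have ifbx: "inv (f b) \<otimes> x \<in> carrier G" using fG x b by simp
      have "f x \<otimes> f (inv (f x) \<otimes> b) = f b \<otimes> f (inv (f b) \<otimes> x)" using h1[OF x b(1)] .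
      then have e1: "f (inv (f x) \<otimes> b) = inv (f x) \<otimes> f b \<otimes> f (inv (f b) \<otimes> x)"
        using inv_solve_left[of "f (inv (f x) \<otimes> b)" "f x" "f b \<otimes> f (inv (f b) \<otimes> x)"] fG ifxb ifbx x b
        by (simp add: m_assoc)
      have "P #> f b = P #> f b0" using h3[OF b(1) b0] b(2) by simp
      then have "P #> (inv (f b) \<otimes> x) = P #> (inv (f b0) \<otimes> x)"
        using cos_rconj[OF nP fG[OF b(1)] fG[OF b0] x] by simp
      then have "K #> f (inv (f b) \<otimes> x) = K #> f (inv (f b0) \<otimes> x)"
        using h2 fG x b b0 by simp
      then have "K #> (inv (f x) \<otimes> f b \<otimes> f (inv (f b) \<otimes> x)) = K #> (inv (f x) \<otimes> f b \<otimes> f (inv (f b0) \<otimes> x))"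
        using cos_lmul[OF nK _ _ _] fG x b b0 ifbx by simp
      then show "K #> f (inv (f x) \<otimes> b) = K #> (inv (f x) \<otimes> f b \<otimes> f (inv (f b0) \<otimes> x))"
        using e1 by simp
    qed
  qed
  have wW: "Wp w" unfolding w_def
    using Wp_mult[OF Wp_mult[OF Wp_mult[OF Wp_f[OF ab1(1)] Wp_f[OF ab1(2)]] Wp_finv[OF ab1(1)]] Wp_finv[OF ab1(2)]] .
  obtain \<rho> where rho: "\<rho> \<in> carrier G" "\<forall>b\<in>carrier G. A #> b = A #> \<one> \<longrightarrow>
      K #> f (w \<otimes> b) = K #> (w \<otimes> f b \<otimes> \<rho>)"
    using WpD[OF wW one_closed] by (elim bexE)
  have A1: "A #> \<one> = A" using cos_self_one[OF nA] .
  have rhoA: "K #> f (w \<otimes> b) = K #> (w \<otimes> f b \<otimes> \<rho>)" if b: "b \<in> A" for b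
  proof -
    have bG: "b \<in> carrier G" using subgroup.mem_carrier[OF sA b] .
    have "A #> b = A #> \<one>" using cos_one_iff[OF nA bG] b A1 by simp
    then show ?thesis using rho(2) bG by blast
  qed
  define g0 where "g0 = f \<one>"
  have g0G: "g0 \<in> carrier G" unfolding g0_def using fG by simp
  have iter: "K #> f (w [^] m) = K #> (w [^] m \<otimes> g0 \<otimes> \<rho> [^] m)" for m :: nat
  proof (induction m)
    case 0 show ?case unfolding g0_def using fG by simp
  next
    case (Suc m)
    have wm: "w [^] m \<in> A" using subgroup_pow_mem[OF sA wA] .
    have wmG: "w [^] m \<in> carrier G" using wG by simp
    have e: "w [^] Suc m = w \<otimes> w [^] m" by (rule nat_pow_Suc2[OF wG])
    have "K #> f (w [^] Suc m) = K #> f (w \<otimes> w [^] m)" by (simp only: e)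
    also have "\<dots> = K #> (w \<otimes> f (w [^] m) \<otimes> \<rho>)" using rhoA[OF wm] .
    also have "\<dots> = K #> (w \<otimes> (w [^] m \<otimes> g0 \<otimes> \<rho> [^] m) \<otimes> \<rho>)"
      using cos_cong[OF nK wG _ _ rho(1) Suc] fG wmG g0G rho(1) by simp
    also have "\<dots> = K #> (w [^] Suc m \<otimes> g0 \<otimes> \<rho> [^] Suc m)"
      unfolding e using wG wmG g0G rho(1) by (simp add: m_assoc)
    finally show ?case .
  qed
  define v where "v = inv g0 \<otimes> w \<otimes> g0"
  define \<pi>1 where "\<pi>1 = v \<otimes> \<rho>"
  have vG: "v \<in> carrier G" unfolding v_def using g0G wG by simp
  have piG: "\<pi>1 \<in> carrier G" unfolding \<pi>1_def using vG rho(1) by simp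
  have fwG: "f w \<in> carrier G" using fG wG by simp
  have "A #> w = A #> \<one>" using cos_one_iff[OF nA wG] wA A1 by simp
  then have fw: "P #> f w = P #> g0" unfolding g0_def using h3[OF wG one_closed] by simp
  have iter1: "K #> f w = K #> (w \<otimes> g0 \<otimes> \<rho>)" using iter[of "Suc 0"] wG rho(1) by simp
  have "K #> (inv g0 \<otimes> f w) = K #> (inv g0 \<otimes> (w \<otimes> g0 \<otimes> \<rho>))"
    using cos_lmul[OF nK fwG _ inv_closed[OF g0G] iter1] wG g0G rho(1) by simp
  moreover have "inv g0 \<otimes> (w \<otimes> g0 \<otimes> \<rho>) = \<pi>1" unfolding \<pi>1_def v_def
    using wG g0G rho(1) by (simp add: m_assoc)
  ultimately have kpi: "K #> (inv g0 \<otimes> f w) = K #> \<pi>1" by simp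
  have "inv g0 \<otimes> f w \<in> P" using cos_eq_iff2[OF nP g0G fwG] fw by simp
  then have piP: "\<pi>1 \<in> P"
    using cos_mem_transfer[OF nK sP KP piG _ kpi[symmetric]] g0G fwG by simp
  define x' where "x' = inv g0 \<otimes> f a1 \<otimes> g0"
  define y' where "y' = inv g0 \<otimes> f b1 \<otimes> g0"
  have x'G: "x' \<in> carrier G" unfolding x'_def using g0G fG ab1 by simp
  have y'G: "y' \<in> carrier G" unfolding y'_def using g0G fG ab1 by simp
  have v_eq: "v = x' \<otimes> y' \<otimes> inv x' \<otimes> inv y'" unfolding v_def w_def x'_def y'_def
    using fG ab1 g0G by (simp add: m_assoc inv_mult_group)
  have Kc: "K #> (v \<otimes> \<pi>1) = K #> (\<pi>1 \<otimes> v)" unfolding v_eq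
    using comm_centr[OF nK nP KP fin cP pp x'G y'G piP] .
  have VB: "(K #> v) \<otimes>\<^bsub>G Mod K\<^esub> (K #> \<pi>1) = (K #> \<pi>1) \<otimes>\<^bsub>G Mod K\<^esub> (K #> v)"
    using Kc vG piG by simp
  have rho_eq: "\<rho> = inv v \<otimes> \<pi>1" unfolding \<pi>1_def using vG rho(1) by (simp add: m_assoc[symmetric])
  have pw: "K #> (v [^] m \<otimes> \<rho> [^] m) = K #> (\<pi>1 [^] m)" for m :: nat
  proof -
    have "K #> (v [^] m \<otimes> \<rho> [^] m) = (K #> v) [^]\<^bsub>G Mod K\<^esub> m \<otimes>\<^bsub>G Mod K\<^esub>
        (inv\<^bsub>G Mod K\<^esub> (K #> v) \<otimes>\<^bsub>G Mod K\<^esub> (K #> \<pi>1)) [^]\<^bsub>G Mod K\<^esub> m"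
      using vG piG rho(1) unfolding rho_eq by (simp add: phiK.hom_nat_pow)
    also have "\<dots> = (K #> \<pi>1) [^]\<^bsub>G Mod K\<^esub> m"
      using QK.pow_twist[OF _ _ VB] vG piG by simp
    also have "\<dots> = K #> (\<pi>1 [^] m)" using piG by (simp add: phiK.hom_nat_pow)
    finally show ?thesis .
  qed
  have conjw: "inv g0 \<otimes> w [^] m \<otimes> g0 = v [^] m" for m :: nat
    using conj_pow[OF inv_closed[OF g0G] wG, of m] g0G unfolding v_def by simp
  have main: "K #> (inv g0 \<otimes> f (w [^] m)) = K #> (\<pi>1 [^] m)" for m :: nat
  proof -
    have wmG: "w [^] m \<in> carrier G" using wG by simp
    have "K #> (inv g0 \<otimes> f (w [^] m)) = K #> (inv g0 \<otimes> (w [^] m \<otimes> g0 \<otimes> \<rho> [^] m))"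
      using cos_lmul[OF nK _ _ inv_closed[OF g0G] iter[of m]] fG wmG g0G rho(1) by simp
    also have "inv g0 \<otimes> (w [^] m \<otimes> g0 \<otimes> \<rho> [^] m) = v [^] m \<otimes> \<rho> [^] m"
      using conjw[of m, symmetric] wmG g0G rho(1) by (simp add: m_assoc)
    finally show ?thesis using pw by simp
  qed
  have wq: "w [^] q \<in> P" using index_pow[OF nP sA PA fin cA wA] .
  have wqG: "w [^] q \<in> carrier G" using wG by simp
  have "P #> (w [^] q) = P #> \<one>" using cos_one_iff[OF nP wqG] wq cos_self_one[OF nP] by simp
  then have "K #> f (w [^] q) = K #> g0" unfolding g0_def using h2[OF wqG one_closed] by simp
  then have "K #> (inv g0 \<otimes> f (w [^] q)) = K #> (inv g0 \<otimes> g0)"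
    using cos_lmul[OF nK _ g0G inv_closed[OF g0G]] fG wqG by simp
  then have "K #> (\<pi>1 [^] q) = K" using main[of q] g0G cos_self_one[OF nK] by simp
  then have piq: "\<pi>1 [^] q \<in> K" using cos_one_iff[OF nK] piG by simp
  have pip: "\<pi>1 [^] p \<in> K" using index_pow[OF nK sP KP fin cP piP] .
  have "\<pi>1 \<in> K" using coprime_pow_mem[OF sK piG cpq prime_gt_0_nat[OF pp] pip piq] .
  then have "K #> (inv g0 \<otimes> f w) = K" using kpi cos_one_iff[OF nK piG] by simp
  then have "inv g0 \<otimes> f w \<in> K" using iffD1[OF cos_one_iff[OF nK m_closed[OF inv_closed[OF g0G] fwG]]] by blast
  then have "K #> f \<one> = K #> f w" unfolding g0_def[symmetric] using cos_eq_iff2[OF nK g0G fwG] by simp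
  then have "P #> \<one> = P #> w" using h2[OF one_closed wG] by simp
  then have "w \<in> P" using cos_self_one[OF nP] cos_one_iff[OF nP wG] by simp
  then show False using wnP unfolding w_def by simp
qed

end

locale ybe_fin =
  fixes X :: "'a set" and r :: "'a \<times> 'a \<Rightarrow> 'a \<times> 'a"
  assumes sol: "ybe_solution X r" and finX: "finite X"
begin

abbreviation sg :: "'a \<Rightarrow> 'a \<Rightarrow> 'a" where "sg x \<equiv> ybe_sigma r x"
abbreviation sgi :: "'a \<Rightarrow> 'a \<Rightarrow> 'a" where "sgi x \<equiv> inv_into X (ybe_sigma r x)"
abbreviation E :: "nat \<Rightarrow> ('a \<times> 'a) set" where "E k \<equiv> ret_rel X r k"

lemma sg_closed: "x \<in> X \<Longrightarrow> y \<in> X \<Longrightarrow> sg x y \<in> X"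
  using sol unfolding ybe_solution_def ybe_sigma_def by (metis mem_Sigma_iff prod.collapse)

lemma sg_bij: "x \<in> X \<Longrightarrow> bij_betw (sg x) X X"
  using sol unfolding ybe_solution_def by blast

lemma sgi_closed: "x \<in> X \<Longrightarrow> y \<in> X \<Longrightarrow> sgi x y \<in> X"
  using sg_bij by (metis bij_betw_def inv_into_into)

lemma sg_sgi: "x \<in> X \<Longrightarrow> y \<in> X \<Longrightarrow> sg x (sgi x y) = y"
  using sg_bij by (metis bij_betw_def f_inv_into_f)

lemma sgi_sg: "x \<in> X \<Longrightarrow> y \<in> X \<Longrightarrow> sgi x (sg x y) = y"
  using sg_bij by (metis bij_betw_def inv_into_f_f)

lemma gamma_closed: "x \<in> X \<Longrightarrow> y \<in> X \<Longrightarrow> ybe_gamma r y x \<in> X"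
  using sol unfolding ybe_solution_def ybe_gamma_def by (metis mem_Sigma_iff prod.collapse)

lemma ybe1: "x \<in> X \<Longrightarrow> y \<in> X \<Longrightarrow> z \<in> X \<Longrightarrow>
    sg (sg x y) (sg (ybe_gamma r y x) z) = sg x (sg y z)"
proof -
  assume xyz: "x \<in> X" "y \<in> X" "z \<in> X"
  have "(let r12 = (\<lambda>(a, b, c). (fst (r (a, b)), snd (r (a, b)), c));
             r23 = (\<lambda>(a, b, c). (a, fst (r (b, c)), snd (r (b, c))))
         in r12 (r23 (r12 (x, y, z))) = r23 (r12 (r23 (x, y, z))))"
    using sol xyz unfolding ybe_solution_def by blast
  then have "fst (r12 (r23 (r12 (x, y, z)))) = fst (r23 (r12 (r23 (x, y, z))))"
    if "r12 = (\<lambda>(a, b, c). (fst (r (a, b)), snd (r (a, b)), c))"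
       "r23 = (\<lambda>(a, b, c). (a, fst (r (b, c)), snd (r (b, c))))" for r12 r23
    using that by (simp add: Let_def)
  then show ?thesis unfolding ybe_sigma_def ybe_gamma_def by (simp add: case_prod_beta)
qed

lemma invol: "x \<in> X \<Longrightarrow> y \<in> X \<Longrightarrow> sg (sg x y) (ybe_gamma r y x) = x"
proof -
  assume xy: "x \<in> X" "y \<in> X"
  have "r (r (x, y)) = (x, y)" using sol xy unfolding ybe_solution_def by blast
  moreover have "r (x, y) = (sg x y, ybe_gamma r y x)" unfolding ybe_sigma_def ybe_gamma_def by simp
  ultimately have "r (sg x y, ybe_gamma r y x) = (x, y)" by simp
  then show ?thesis unfolding ybe_sigma_def by simp
qed

lemma gamma_eq: "x \<in> X \<Longrightarrow> y \<in> X \<Longrightarrow> ybe_gamma r y x = sgi (sg x y) x"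
  using invol sgi_sg gamma_closed sg_closed by metis

lemma sol_identity:
  assumes "x \<in> X" "y \<in> X" "z \<in> X"
  shows "sg x (sg (sgi x y) z) = sg y (sg (sgi y x) z)"
proof -
  have u: "sgi x y \<in> X" using sgi_closed assms by simp
  have "sg x (sg (sgi x y) z) = sg (sg x (sgi x y)) (sg (ybe_gamma r (sgi x y) x) z)"
    using ybe1[OF assms(1) u assms(3)] by simp
  also have "\<dots> = sg y (sg (sgi y x) z)"
    using gamma_eq[OF assms(1) u] sg_sgi assms by simp
  finally show ?thesis .
qed

end

context ybe_fin begin

lemma E_Suc: "(x, y) \<in> E (Suc k) \<longleftrightarrow> x \<in> X \<and> y \<in> X \<and> (\<forall>z\<in>X. (sg x z, sg y z) \<in> E k)"
  by simp

lemma E_sub: "E k \<subseteq> X \<times> X"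
  by (induction k) auto

lemma E_memD: "(x, y) \<in> E k \<Longrightarrow> x \<in> X \<and> y \<in> X"
  using E_sub by blast

lemma E_refl: "x \<in> X \<Longrightarrow> (x, x) \<in> E k"
proof (induction k arbitrary: x)
  case 0 then show ?case by (auto simp: Id_on_def)
next
  case (Suc k) then show ?case using sg_closed by simp
qed

lemma E_sym: "(x, y) \<in> E k \<Longrightarrow> (y, x) \<in> E k"
proof (induction k arbitrary: x y)
  case 0 then show ?case by (auto simp: Id_on_def)
next
  case (Suc k) then show ?case by simp
qed

lemma E_trans: "(x, y) \<in> E k \<Longrightarrow> (y, z) \<in> E k \<Longrightarrow> (x, z) \<in> E k"
proof (induction k arbitrary: x y z)
  case 0 then show ?case by (auto simp: Id_on_def)
next
  case (Suc k) then show ?case by simp blast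
qed

lemma E_mono: "E k \<subseteq> E (Suc k)"
proof (induction k)
  case 0 show ?case using E_refl sg_closed by auto
next
  case (Suc k)
  show ?case
  proof
    fix p assume "p \<in> E (Suc k)"
    then obtain x y where "p = (x, y)" "(x, y) \<in> E (Suc k)" by (cases p) auto
    then show "p \<in> E (Suc (Suc k))" using Suc by auto
  qed
qed

lemma E_mono': "(x, y) \<in> E k \<Longrightarrow> (x, y) \<in> E (Suc k)"
  using E_mono by blast

lemma E_inv_fwd:
  "(\<forall>x y a. (x, y) \<in> E k \<longrightarrow> a \<in> X \<longrightarrow> (sgi a x, sgi a y) \<in> E k) \<and>
   (\<forall>x y a. (x, y) \<in> E k \<longrightarrow> a \<in> X \<longrightarrow> (sg a x, sg a y) \<in> E k)"
proof (induction k)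
  case 0 then show ?case using sgi_closed sg_closed by auto
next
  case (Suc k)
  have IHi: "\<And>x y a. (x, y) \<in> E k \<Longrightarrow> a \<in> X \<Longrightarrow> (sgi a x, sgi a y) \<in> E k" using Suc by blast
  have IHf: "\<And>x y a. (x, y) \<in> E k \<Longrightarrow> a \<in> X \<Longrightarrow> (sg a x, sg a y) \<in> E k" using Suc by blast
  have inv: "(sgi a x, sgi a y) \<in> E (Suc k)" if xy: "(x, y) \<in> E (Suc k)" and a: "a \<in> X" for x y a
  proof -
    have xX: "x \<in> X" and yX: "y \<in> X" using xy by auto
    have xyk: "\<And>z. z \<in> X \<Longrightarrow> (sg x z, sg y z) \<in> E k" using xy by auto
    have "(sg (sgi a x) w, sg (sgi a y) w) \<in> E k" if w: "w \<in> X" for w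
    proof -
      define u where "u = sgi x a"
      define u' where "u' = sgi y a"
      have uX: "u \<in> X" and u'X: "u' \<in> X" unfolding u_def u'_def using sgi_closed xX yX a by auto
      have "(sg x u, sg y u) \<in> E k" using xyk uX by simp
      then have "(a, sg y u) \<in> E k" unfolding u_def using sg_sgi xX a by simp
      then have "(u', u) \<in> E k" unfolding u'_def using IHi[of a "sg y u" y] yX uX sgi_sg by simp
      then have "(u, u') \<in> E (Suc k)" using E_sym E_mono' by blast
      then have "(sg u w, sg u' w) \<in> E k" using w by simp
      then have "(sg x (sg u w), sg x (sg u' w)) \<in> E k" using IHf xX by blast
      moreover have "(sg x (sg u' w), sg y (sg u' w)) \<in> E k" using xyk sg_closed u'X w by simp
      ultimately have "(sg x (sg u w), sg y (sg u' w)) \<in> E k" using E_trans by blast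
      moreover have "sg a (sg (sgi a x) w) = sg x (sg u w)" unfolding u_def
        using sol_identity[OF a xX w] .
      moreover have "sg a (sg (sgi a y) w) = sg y (sg u' w)" unfolding u'_def
        using sol_identity[OF a yX w] .
      ultimately have "(sg a (sg (sgi a x) w), sg a (sg (sgi a y) w)) \<in> E k" by simp
      then have "(sgi a (sg a (sg (sgi a x) w)), sgi a (sg a (sg (sgi a y) w))) \<in> E k"
        using IHi a by blast
      then show ?thesis using sgi_sg sg_closed sgi_closed a xX yX w by simp
    qed
    then show ?thesis using sgi_closed xX yX a by simp
  qed
  have fwd: "(sg a x, sg a y) \<in> E (Suc k)" if xy: "(x, y) \<in> E (Suc k)" and a: "a \<in> X" for x y a
  proof -
    define R where "R = E (Suc k)"
    define \<Phi> where "\<Phi> = (\<lambda>(u::'a, v::'a). (sgi a u, sgi a v))"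
    have finR: "finite R" unfolding R_def using E_sub finX by (meson finite_SigmaI finite_subset)
    have sub: "\<Phi> ` R \<subseteq> R" unfolding \<Phi>_def R_def using inv a by auto
    have injX: "inj_on (sgi a) X" using bij_betw_inv_into[OF sg_bij[OF a]] bij_betw_def by blast
    have "inj_on \<Phi> R"
    proof (rule inj_onI)
      fix p q assume "p \<in> R" "q \<in> R" "\<Phi> p = \<Phi> q"
      then show "p = q" unfolding \<Phi>_def R_def using E_sub injX
        by (cases p, cases q) (auto dest: inj_onD)
    qed
    then have "card (\<Phi> ` R) = card R" by (simp add: card_image)
    then have eq: "\<Phi> ` R = R" using card_subset_eq[OF finR sub] by simp
    have "(x, y) \<in> \<Phi> ` R" using eq xy unfolding R_def by simp
    then obtain x' y' where x'y': "(x', y') \<in> R" "sgi a x' = x" "sgi a y' = y"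
      unfolding \<Phi>_def by auto
    have "x' \<in> X" "y' \<in> X" using x'y'(1) E_sub unfolding R_def by auto
    then have "sg a x = x'" "sg a y = y'" using x'y'(2,3) sg_sgi a by auto
    then show ?thesis using x'y'(1) unfolding R_def by simp
  qed
  show ?case using inv fwd by blast
qed

lemma E_inv: "(x, y) \<in> E k \<Longrightarrow> a \<in> X \<Longrightarrow> (sgi a x, sgi a y) \<in> E k"
  using E_inv_fwd by blast

lemma E_fwd: "(x, y) \<in> E k \<Longrightarrow> a \<in> X \<Longrightarrow> (sg a x, sg a y) \<in> E k"
  using E_inv_fwd by blast

lemma E_equiv: "equiv X (E k)"
  unfolding equiv_def refl_on_def sym_def trans_def
  using E_sub E_refl E_sym E_trans by blast

end

context ybe_fin begin

abbreviation BG where "BG \<equiv> BijGroup X"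
definition sh :: "'a \<Rightarrow> 'a \<Rightarrow> 'a" where "sh x = restrict (sg x) X"
abbreviation GS where "GS \<equiv> ybe_group X r"

lemma GS_def': "GS = generate BG (sh ` X)"
  unfolding ybe_group_def sh_def by simp

lemma grpBG: "group BG" by (rule group_BijGroup)

lemma sh_Bij: "x \<in> X \<Longrightarrow> sh x \<in> Bij X"
  unfolding Bij_def sh_def using sg_bij bij_betw_cong[of X "restrict (sg x) X" "sg x" X] by simp

lemma sh_app: "z \<in> X \<Longrightarrow> sh x z = sg x z" unfolding sh_def by simp

lemma shS: "sh ` X \<subseteq> carrier BG" using sh_Bij by (auto simp: BijGroup_def)

lemma GS_subgroup: "subgroup GS BG"
  unfolding GS_def' using group.generate_is_subgroup[OF grpBG shS] .

lemma GS_Bij: "g \<in> GS \<Longrightarrow> g \<in> Bij X"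
  using subgroup.subset[OF GS_subgroup] by (auto simp: BijGroup_def)

lemma Bij_app: "g \<in> Bij X \<Longrightarrow> x \<in> X \<Longrightarrow> g x \<in> X"
  using Bij_imp_funcset by blast

lemma mult_BG: "g \<in> Bij X \<Longrightarrow> h \<in> Bij X \<Longrightarrow> g \<otimes>\<^bsub>BG\<^esub> h = compose X g h"
  by (simp add: BijGroup_def)

lemma app_mult: "g \<in> Bij X \<Longrightarrow> h \<in> Bij X \<Longrightarrow> x \<in> X \<Longrightarrow> (g \<otimes>\<^bsub>BG\<^esub> h) x = g (h x)"
  by (simp add: mult_BG compose_def)

lemma app_one: "x \<in> X \<Longrightarrow> \<one>\<^bsub>BG\<^esub> x = x"
  by (simp add: BijGroup_def)

lemma one_BG: "\<one>\<^bsub>BG\<^esub> = (\<lambda>x\<in>X. x)"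
  by (simp add: BijGroup_def)

lemma app_inv: "g \<in> Bij X \<Longrightarrow> x \<in> X \<Longrightarrow> (inv\<^bsub>BG\<^esub> g) x = inv_into X g x"
  by (simp add: inv_BijGroup)

lemma inv_app_app: "g \<in> Bij X \<Longrightarrow> x \<in> X \<Longrightarrow> (inv\<^bsub>BG\<^esub> g) (g x) = x"
  using app_inv Bij_app Bij_def by (metis Int_iff bij_betw_inv_into_left mem_Collect_eq)

lemma app_inv_app: "g \<in> Bij X \<Longrightarrow> x \<in> X \<Longrightarrow> g ((inv\<^bsub>BG\<^esub> g) x) = x"
  using app_inv Bij_def by (metis Int_iff bij_betw_inv_into_right mem_Collect_eq)

lemma inv_sh_app: "a \<in> X \<Longrightarrow> z \<in> X \<Longrightarrow> (inv\<^bsub>BG\<^esub> (sh a)) z = sgi a z"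
proof -
  assume a: "a \<in> X" and z: "z \<in> X"
  have "(inv\<^bsub>BG\<^esub> (sh a)) z = inv_into X (sh a) z" using app_inv sh_Bij a z by simp
  also have "\<dots> = sgi a z" unfolding inv_into_def sh_def
    by (rule arg_cong[where f = Eps]) (auto simp: fun_eq_iff)
  finally show ?thesis .
qed

lemma E_GS: "g \<in> GS \<Longrightarrow> (x, y) \<in> E k \<Longrightarrow> (g x, g y) \<in> E k"
  unfolding GS_def'
proof (induction g arbitrary: x y rule: generate.induct)
  case one then show ?case using E_memD app_one by simp
next
  case (incl h) then show ?case using E_memD sh_app E_fwd by auto
next
  case (inv h)
  then obtain a where a: "a \<in> X" "h = sh a" by blast
  then show ?case using inv.prems E_memD inv_sh_app E_inv by simp
next
  case (eng h1 h2)
  have "h1 \<in> Bij X" "h2 \<in> Bij X" using eng.hyps GS_Bij GS_def' by auto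
  then show ?case using eng E_memD app_mult by simp
qed

lemma E_GS_rev: "g \<in> GS \<Longrightarrow> x \<in> X \<Longrightarrow> y \<in> X \<Longrightarrow> (g x, g y) \<in> E k \<Longrightarrow> (x, y) \<in> E k"
proof -
  assume g: "g \<in> GS" and xy: "x \<in> X" "y \<in> X" "(g x, g y) \<in> E k"
  have ig: "inv\<^bsub>BG\<^esub> g \<in> GS" using subgroup.m_inv_closed[OF GS_subgroup g] .
  have "((inv\<^bsub>BG\<^esub> g) (g x), (inv\<^bsub>BG\<^esub> g) (g y)) \<in> E k" using E_GS[OF ig xy(3)] .
  then show ?thesis using inv_app_app GS_Bij[OF g] xy by simp
qed

end

locale ybe_reg = ybe_fin +
  fixes x0 :: 'a
  assumes x0: "x0 \<in> X"
    and trans: "\<And>y. y \<in> X \<Longrightarrow> \<exists>g\<in>GS. g x0 = y"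
    and reg: "\<And>g h. g \<in> GS \<Longrightarrow> h \<in> GS \<Longrightarrow> g x0 = h x0 \<Longrightarrow> g = h"
begin

abbreviation GG where "GG \<equiv> BG\<lparr>carrier := GS\<rparr>"
definition f :: "('a \<Rightarrow> 'a) \<Rightarrow> 'a \<Rightarrow> 'a" where "f g = sh (g x0)"
definition Hs :: "nat \<Rightarrow> ('a \<Rightarrow> 'a) set" where "Hs k = {g \<in> GS. (g x0, x0) \<in> E k}"
definition Ks :: "nat \<Rightarrow> ('a \<Rightarrow> 'a) set" where "Ks k = {g \<in> GS. \<forall>z\<in>X. (g z, z) \<in> E k}"

lemma grpGG: "group GG" using subgroup.subgroup_is_group[OF GS_subgroup grpBG] .

lemma GG_mult: "a \<otimes>\<^bsub>GG\<^esub> b = a \<otimes>\<^bsub>BG\<^esub> b" by simp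
lemma GG_one: "\<one>\<^bsub>GG\<^esub> = \<one>\<^bsub>BG\<^esub>" by simp
lemma GG_inv: "a \<in> GS \<Longrightarrow> inv\<^bsub>GG\<^esub> a = inv\<^bsub>BG\<^esub> a"
  using group.m_inv_consistent[OF grpBG GS_subgroup] by simp

lemma GS_one: "\<one>\<^bsub>BG\<^esub> \<in> GS" using subgroup.one_closed[OF GS_subgroup] .
lemma GS_mult: "a \<in> GS \<Longrightarrow> b \<in> GS \<Longrightarrow> a \<otimes>\<^bsub>BG\<^esub> b \<in> GS" using subgroup.m_closed[OF GS_subgroup] .
lemma GS_inv: "a \<in> GS \<Longrightarrow> inv\<^bsub>BG\<^esub> a \<in> GS" using subgroup.m_inv_closed[OF GS_subgroup] .

lemma GS_app: "g \<in> GS \<Longrightarrow> x \<in> X \<Longrightarrow> g x \<in> X" using GS_Bij Bij_app by blast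

lemma GS_app_mult: "g \<in> GS \<Longrightarrow> h \<in> GS \<Longrightarrow> x \<in> X \<Longrightarrow> (g \<otimes>\<^bsub>BG\<^esub> h) x = g (h x)"
  using app_mult GS_Bij by blast

lemma GS_inv_app: "g \<in> GS \<Longrightarrow> x \<in> X \<Longrightarrow> (inv\<^bsub>BG\<^esub> g) (g x) = x"
  using inv_app_app GS_Bij by blast

lemma GS_app_inv: "g \<in> GS \<Longrightarrow> x \<in> X \<Longrightarrow> g ((inv\<^bsub>BG\<^esub> g) x) = x"
  using app_inv_app GS_Bij by blast

lemma sh_GS: "x \<in> X \<Longrightarrow> sh x \<in> GS"
  unfolding GS_def' by (rule generate.incl) simp

lemma f_GS: "g \<in> GS \<Longrightarrow> f g \<in> GS" unfolding f_def using sh_GS GS_app x0 by simp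

lemma Hs_subgroup: "subgroup (Hs k) GG"
proof (rule group.subgroupI[OF grpGG])
  show "Hs k \<subseteq> carrier GG" unfolding Hs_def by auto
  show "Hs k \<noteq> {}" unfolding Hs_def using GS_one app_one x0 E_refl by auto
next
  fix a assume a: "a \<in> Hs k"
  then have aG: "a \<in> GS" and e: "(a x0, x0) \<in> E k" unfolding Hs_def by auto
  have "((inv\<^bsub>BG\<^esub> a) (a x0), (inv\<^bsub>BG\<^esub> a) x0) \<in> E k" using E_GS[OF GS_inv[OF aG] e] .
  then have "((inv\<^bsub>BG\<^esub> a) x0, x0) \<in> E k" using GS_inv_app aG x0 E_sym by simp
  then show "inv\<^bsub>GG\<^esub> a \<in> Hs k" unfolding Hs_def using GG_inv aG GS_inv by simp
next
  fix a b assume "a \<in> Hs k" "b \<in> Hs k"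
  then have ab: "a \<in> GS" "b \<in> GS" "(a x0, x0) \<in> E k" "(b x0, x0) \<in> E k" unfolding Hs_def by auto
  have "(a (b x0), a x0) \<in> E k" using E_GS[OF ab(1) ab(4)] .
  then have "(a (b x0), x0) \<in> E k" using E_trans ab(3) by blast
  then show "a \<otimes>\<^bsub>GG\<^esub> b \<in> Hs k" unfolding Hs_def using ab GS_mult GS_app_mult x0 by simp
qed

lemma Ks_normal: "Ks k \<lhd> GG"
proof -
  have sub: "subgroup (Ks k) GG"
  proof (rule group.subgroupI[OF grpGG])
    show "Ks k \<subseteq> carrier GG" unfolding Ks_def by auto
    show "Ks k \<noteq> {}" unfolding Ks_def using GS_one app_one E_refl by auto
  next
    fix a assume a: "a \<in> Ks k"
    then have aG: "a \<in> GS" and e: "\<And>z. z \<in> X \<Longrightarrow> (a z, z) \<in> E k" unfolding Ks_def by auto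
    have "((inv\<^bsub>BG\<^esub> a) z, z) \<in> E k" if z: "z \<in> X" for z
    proof -
      have iz: "(inv\<^bsub>BG\<^esub> a) z \<in> X" using GS_app[OF GS_inv[OF aG] z] .
      have "(a ((inv\<^bsub>BG\<^esub> a) z), (inv\<^bsub>BG\<^esub> a) z) \<in> E k" using e[OF iz] .
      then have "(z, (inv\<^bsub>BG\<^esub> a) z) \<in> E k" unfolding GS_app_inv[OF aG z] .
      then show ?thesis using E_sym by blast
    qed
    then show "inv\<^bsub>GG\<^esub> a \<in> Ks k" unfolding Ks_def using GG_inv aG GS_inv by simp
  next
    fix a b assume "a \<in> Ks k" "b \<in> Ks k"
    then have ab: "a \<in> GS" "b \<in> GS" "\<And>z. z \<in> X \<Longrightarrow> (a z, z) \<in> E k" "\<And>z. z \<in> X \<Longrightarrow> (b z, z) \<in> E k"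
      unfolding Ks_def by auto
    have "((a \<otimes>\<^bsub>BG\<^esub> b) z, z) \<in> E k" if z: "z \<in> X" for z
      using ab(3)[OF GS_app[OF ab(2) z]] ab(4)[OF z] E_trans GS_app_mult ab z by metis
    then show "a \<otimes>\<^bsub>GG\<^esub> b \<in> Ks k" unfolding Ks_def using ab GS_mult by simp
  qed
  show ?thesis unfolding group.normal_inv_iff[OF grpGG]
  proof (intro conjI ballI sub)
    fix x h assume x: "x \<in> carrier GG" and h: "h \<in> Ks k"
    have xG: "x \<in> GS" using x by simp
    have hG: "h \<in> GS" and e: "\<And>z. z \<in> X \<Longrightarrow> (h z, z) \<in> E k" using h unfolding Ks_def by auto
    have c: "x \<otimes>\<^bsub>BG\<^esub> h \<otimes>\<^bsub>BG\<^esub> inv\<^bsub>BG\<^esub> x \<in> GS" using xG hG GS_mult GS_inv by simp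
    have "((x \<otimes>\<^bsub>BG\<^esub> h \<otimes>\<^bsub>BG\<^esub> inv\<^bsub>BG\<^esub> x) z, z) \<in> E k" if z: "z \<in> X" for z
    proof -
      have iz: "(inv\<^bsub>BG\<^esub> x) z \<in> X" using GS_app[OF GS_inv[OF xG] z] .
      have "(x (h ((inv\<^bsub>BG\<^esub> x) z)), x ((inv\<^bsub>BG\<^esub> x) z)) \<in> E k" using E_GS[OF xG e[OF iz]] .
      moreover have "(x \<otimes>\<^bsub>BG\<^esub> h \<otimes>\<^bsub>BG\<^esub> inv\<^bsub>BG\<^esub> x) z = x (h ((inv\<^bsub>BG\<^esub> x) z))"
        using GS_app_mult xG hG GS_mult GS_inv z iz by simp
      ultimately show ?thesis using GS_app_inv[OF xG z] by simp
    qed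
    then show "x \<otimes>\<^bsub>GG\<^esub> h \<otimes>\<^bsub>GG\<^esub> inv\<^bsub>GG\<^esub> x \<in> Ks k" unfolding Ks_def using c GG_inv xG by simp
  qed
qed

lemma Ks_sub_Hs: "Ks k \<subseteq> Hs k" unfolding Ks_def Hs_def using x0 by auto

end

context ybe_reg begin

lemma RA:
  assumes a: "a \<in> GS" and b: "b \<in> GS"
  shows "(Ks j #>\<^bsub>GG\<^esub> f a = Ks j #>\<^bsub>GG\<^esub> f b) \<longleftrightarrow> (a x0, b x0) \<in> E (Suc j)"
proof -
  define x where "x = a x0"
  define y where "y = b x0"
  have xX: "x \<in> X" and yX: "y \<in> X" unfolding x_def y_def using GS_app a b x0 by auto
  have fa: "f a = sh x" and fb: "f b = sh y" unfolding f_def x_def y_def by auto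
  have shx: "sh x \<in> GS" and shy: "sh y \<in> GS" using sh_GS xX yX by auto
  have "(Ks j #>\<^bsub>GG\<^esub> f a = Ks j #>\<^bsub>GG\<^esub> f b) \<longleftrightarrow> inv\<^bsub>GG\<^esub> (f a) \<otimes>\<^bsub>GG\<^esub> f b \<in> Ks j"
    using group.cos_eq_iff2[OF grpGG Ks_normal] f_GS a b by simp
  also have "\<dots> \<longleftrightarrow> inv\<^bsub>BG\<^esub> (sh x) \<otimes>\<^bsub>BG\<^esub> sh y \<in> Ks j" unfolding fa fb using GG_inv shx by simp
  also have "\<dots> \<longleftrightarrow> (\<forall>z\<in>X. (sgi x (sg y z), z) \<in> E j)"
  proof -
    have "inv\<^bsub>BG\<^esub> (sh x) \<otimes>\<^bsub>BG\<^esub> sh y \<in> GS" using GS_mult GS_inv shx shy by simp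
    moreover have "(inv\<^bsub>BG\<^esub> (sh x) \<otimes>\<^bsub>BG\<^esub> sh y) z = sgi x (sg y z)" if z: "z \<in> X" for z
      using GS_app_mult[OF GS_inv[OF shx] shy z] sh_app[OF z] inv_sh_app[OF xX] sg_closed[OF yX z] by simp
    ultimately show ?thesis unfolding Ks_def by simp
  qed
  also have "\<dots> \<longleftrightarrow> (\<forall>z\<in>X. (sg y z, sg x z) \<in> E j)"
  proof (intro iffI ballI)
    fix z assume h: "\<forall>z\<in>X. (sgi x (sg y z), z) \<in> E j" and z: "z \<in> X"
    have "(sg x (sgi x (sg y z)), sg x z) \<in> E j" using E_fwd h z xX by blast
    then show "(sg y z, sg x z) \<in> E j" using sg_sgi xX sg_closed yX z by simp
  next
    fix z assume h: "\<forall>z\<in>X. (sg y z, sg x z) \<in> E j" and z: "z \<in> X"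
    have "(sgi x (sg y z), sgi x (sg x z)) \<in> E j" using E_inv h z xX by blast
    then show "(sgi x (sg y z), z) \<in> E j" using sgi_sg xX z by simp
  qed
  also have "\<dots> \<longleftrightarrow> (y, x) \<in> E (Suc j)" using xX yX by simp
  also have "\<dots> \<longleftrightarrow> (x, y) \<in> E (Suc j)" using E_sym by blast
  finally show ?thesis unfolding x_def y_def .
qed

lemma RB:
  assumes KH: "Ks j = Hs j" and a: "a \<in> GS" and b: "b \<in> GS"
  shows "(Ks j #>\<^bsub>GG\<^esub> a = Ks j #>\<^bsub>GG\<^esub> b) \<longleftrightarrow> (a x0, b x0) \<in> E j"
proof -
  have ax: "a x0 \<in> X" and bx: "b x0 \<in> X" using GS_app a b x0 by auto
  have "(Ks j #>\<^bsub>GG\<^esub> a = Ks j #>\<^bsub>GG\<^esub> b) \<longleftrightarrow> inv\<^bsub>GG\<^esub> a \<otimes>\<^bsub>GG\<^esub> b \<in> Hs j"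
    using group.cos_eq_iff2[OF grpGG Ks_normal[of j]] a b KH by simp
  also have "\<dots> \<longleftrightarrow> ((inv\<^bsub>BG\<^esub> a) (b x0), x0) \<in> E j"
    unfolding Hs_def using GG_inv a b GS_mult GS_inv GS_app_mult[OF GS_inv[OF a] b x0] by simp
  also have "\<dots> \<longleftrightarrow> (b x0, a x0) \<in> E j"
  proof
    assume "((inv\<^bsub>BG\<^esub> a) (b x0), x0) \<in> E j"
    then have "(a ((inv\<^bsub>BG\<^esub> a) (b x0)), a x0) \<in> E j" using E_GS[OF a] by blast
    then show "(b x0, a x0) \<in> E j" unfolding GS_app_inv[OF a bx] .
  next
    assume "(b x0, a x0) \<in> E j"
    then have "((inv\<^bsub>BG\<^esub> a) (b x0), (inv\<^bsub>BG\<^esub> a) (a x0)) \<in> E j" using E_GS[OF GS_inv[OF a]] by blast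
    then show "((inv\<^bsub>BG\<^esub> a) (b x0), x0) \<in> E j" unfolding GS_inv_app[OF a x0] .
  qed
  also have "\<dots> \<longleftrightarrow> (a x0, b x0) \<in> E j" using E_sym by blast
  finally show ?thesis .
qed

lemma h1_GG:
  assumes a: "a \<in> GS" and b: "b \<in> GS"
  shows "f a \<otimes>\<^bsub>GG\<^esub> f (inv\<^bsub>GG\<^esub> (f a) \<otimes>\<^bsub>GG\<^esub> b) = f b \<otimes>\<^bsub>GG\<^esub> f (inv\<^bsub>GG\<^esub> (f b) \<otimes>\<^bsub>GG\<^esub> a)"
proof -
  define x where "x = a x0"
  define y where "y = b x0"
  have xX: "x \<in> X" and yX: "y \<in> X" unfolding x_def y_def using GS_app a b x0 by auto
  have fa: "f a = sh x" and fb: "f b = sh y" unfolding f_def x_def y_def by auto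
  have shx: "sh x \<in> GS" and shy: "sh y \<in> GS" using sh_GS xX yX by auto
  have "(inv\<^bsub>GG\<^esub> (f a) \<otimes>\<^bsub>GG\<^esub> b) x0 = sgi x y"
    unfolding fa GG_mult GG_inv[OF shx] GS_app_mult[OF GS_inv[OF shx] b x0] y_def[symmetric]
    using inv_sh_app[OF xX yX] .
  then have e1: "f (inv\<^bsub>GG\<^esub> (f a) \<otimes>\<^bsub>GG\<^esub> b) = sh (sgi x y)"
    unfolding f_def by simp
  have "(inv\<^bsub>GG\<^esub> (f b) \<otimes>\<^bsub>GG\<^esub> a) x0 = sgi y x"
    unfolding fb GG_mult GG_inv[OF shy] GS_app_mult[OF GS_inv[OF shy] a x0] x_def[symmetric]
    using inv_sh_app[OF yX xX] .
  then have e2: "f (inv\<^bsub>GG\<^esub> (f b) \<otimes>\<^bsub>GG\<^esub> a) = sh (sgi y x)"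
    unfolding f_def by simp
  have u1: "sh (sgi x y) \<in> Bij X" "sh (sgi y x) \<in> Bij X" using sh_Bij sgi_closed xX yX by auto
  have "sh x \<otimes>\<^bsub>BG\<^esub> sh (sgi x y) = sh y \<otimes>\<^bsub>BG\<^esub> sh (sgi y x)"
  proof -
    have "compose X (sh x) (sh (sgi x y)) = compose X (sh y) (sh (sgi y x))"
    proof (rule ext)
      fix z show "compose X (sh x) (sh (sgi x y)) z = compose X (sh y) (sh (sgi y x)) z"
      proof (cases "z \<in> X")
        case True
        then show ?thesis unfolding compose_def using sol_identity[OF xX yX True] sh_app sg_closed
            sgi_closed xX yX by simp
      next
        case False then show ?thesis unfolding compose_def by simp
      qed
    qed
    then show ?thesis using mult_BG sh_Bij xX yX u1 by simp
  qed
  then show ?thesis unfolding e1 e2 unfolding fa fb by simp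
qed

end

lemma sq_contra:
  fixes N s :: nat
  assumes "squarefree N" "prime s" "s * s dvd N"
  shows False
proof -
  have "s ^ 2 dvd N" using assms(3) by (simp add: power2_eq_square)
  then have "s dvd 1" using squarefreeD[OF assms(1)] by blast
  then show False using assms(2) by simp
qed

lemma pf_strict:
  fixes N d1 d2 :: nat
  assumes sq: "squarefree N" and d12: "d1 dvd d2" and d2N: "d2 dvd N" and ne: "d1 \<noteq> d2"
  shows "prime_factors d1 \<subset> prime_factors d2"
proof -
  have N0: "N \<noteq> 0" using sq not_squarefree_0 by metis
  have d20: "d2 \<noteq> 0" using d2N N0 by auto
  obtain t where t: "d2 = d1 * t" using d12 by (auto elim: dvdE)
  have d10: "d1 \<noteq> 0" and t0: "t \<noteq> 0" using t d20 by auto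
  have t1: "t \<noteq> 1" using t ne by auto
  obtain s where s: "prime s" "s dvd t" using prime_factor_nat[OF t1] by blast
  have sub: "prime_factors d1 \<subseteq> prime_factors d2"
    using d12 d20 by (auto simp: in_prime_factors_iff intro: dvd_trans)
  have "s \<in> prime_factors d2" using s t d20 by (auto simp: in_prime_factors_iff)
  moreover have "s \<notin> prime_factors d1"
  proof
    assume "s \<in> prime_factors d1"
    then have "s dvd d1" by auto
    then have "s * s dvd d1 * t" using s(2) by (rule mult_dvd_mono)
    then have "s * s dvd N" using t d2N dvd_trans by metis
    then show False using sq_contra[OF sq s(1)] by blast
  qed
  ultimately show ?thesis using sub by blast
qed

lemma pf_chain:
  fixes s :: "nat \<Rightarrow> nat" and N :: nat
  assumes dv: "\<And>i. i < J \<Longrightarrow> s i dvd s (Suc i)" and ne: "\<And>i. i < J \<Longrightarrow> s i \<noteq> s (Suc i)"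
    and sJ: "s J dvd N" and sq: "squarefree N"
    and ij: "i \<le> j" and jJ: "j \<le> J"
  shows "card (prime_factors (s i)) + (j - i) \<le> card (prime_factors (s j))"
proof -
  have sN: "s k dvd N" if "k \<le> J" for k
  proof -
    have "s k dvd s J" using that
    proof (induction k rule: inc_induct)
      case base then show ?case by simp
    next
      case (step m) then show ?case using dv dvd_trans by blast
    qed
    then show ?thesis using sJ dvd_trans by blast
  qed
  show ?thesis using ij jJ
  proof (induction j rule: dec_induct)
    case base then show ?case by simp
  next
    case (step m)
    have mJ: "m < J" using step by simp
    have "prime_factors (s m) \<subset> prime_factors (s (Suc m))"
      using pf_strict[OF sq dv[OF mJ] sN ne[OF mJ]] mJ by simp
    then have "card (prime_factors (s m)) < card (prime_factors (s (Suc m)))"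
      by (rule psubset_card_mono[rotated]) simp
    then show ?case using step by simp
  qed
qed

lemma prime_quot:
  fixes N d1 d2 t :: nat
  assumes sq: "squarefree N" and t: "d2 = d1 * t" and d2N: "d2 dvd N"
    and c: "card (prime_factors d2) = card (prime_factors d1) + 1"
  shows "prime t"
proof -
  have N0: "N \<noteq> 0" using sq not_squarefree_0 by metis
  have d20: "d2 \<noteq> 0" using d2N N0 by auto
  have d10: "d1 \<noteq> 0" and t0: "t \<noteq> 0" using t d20 by auto
  have un: "prime_factors d2 = prime_factors d1 \<union> prime_factors t"
    using prime_factors_product[OF d10 t0] t by simp
  have dis: "prime_factors d1 \<inter> prime_factors t = {}"
  proof (rule ccontr)
    assume "prime_factors d1 \<inter> prime_factors t \<noteq> {}"
    then obtain s where "s \<in> prime_factors d1" "s \<in> prime_factors t" by blast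
    then have s: "prime s" "s dvd d1" "s dvd t" by auto
    then have "s * s dvd d2" using t by (simp add: mult_dvd_mono)
    then have "s * s dvd N" using d2N dvd_trans by blast
    then show False using sq_contra[OF sq s(1)] by blast
  qed
  have "card (prime_factors d2) = card (prime_factors d1) + card (prime_factors t)"
    using un dis by (simp add: card_Un_disjoint)
  then have c1: "card (prime_factors t) = 1" using c by simp
  then obtain s where ps: "prime_factors t = {s}" using card_1_singletonE by blast
  then have s: "prime s" "s dvd t" by auto
  obtain t' where t': "t = s * t'" using s(2) by (auto elim: dvdE)
  have "t' = 1"
  proof (rule ccontr)
    assume "t' \<noteq> 1"
    then obtain s' where s': "prime s'" "s' dvd t'" using prime_factor_nat by blast
    have "t' \<noteq> 0" using t0 t' by auto
    then have "s' \<in> prime_factors t" using s' t' t0 by (auto simp: in_prime_factors_iff)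
    then have "s' = s" using ps by auto
    then have "s * s dvd t" using s' t' by (simp add: mult_dvd_mono)
    then have "s * s dvd N" using t d2N by (metis dvd_mult_left dvd_trans mult.commute)
    then show False using sq_contra[OF sq s(1)] by blast
  qed
  then show ?thesis using t' s by simp
qed

lemma sqf_coprime:
  fixes N a b :: nat
  assumes sq: "squarefree N" and ab: "a * b dvd N"
  shows "coprime a b"
proof (rule ccontr)
  assume "\<not> coprime a b"
  then have "gcd a b \<noteq> 1" by (simp add: coprime_iff_gcd_eq_1)
  then obtain s where s: "prime s" "s dvd gcd a b" using prime_factor_nat by blast
  then have "s dvd a" "s dvd b" by auto
  then have "s * s dvd a * b" by (simp add: mult_dvd_mono)
  then have "s * s dvd N" using ab dvd_trans by blast
  then show False using sq_contra[OF sq s(1)] by blast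
qed

lemma pf_prod_card:
  fixes p :: "nat \<Rightarrow> nat"
  assumes "\<forall>i<n. prime (p i)"
  shows "card (prime_factors (\<Prod>i<n. p i)) \<le> n"
proof -
  have "prime_factors (\<Prod>i<n. p i) \<subseteq> p ` {..<n}"
  proof
    fix s assume "s \<in> prime_factors (\<Prod>i<n. p i)"
    then have s: "prime s" "s dvd (\<Prod>i<n. p i)" by auto
    then obtain i where i: "i < n" "s dvd p i" using prime_dvd_prod_iff[of "{..<n}" s p] by auto
    then have "s = p i" using primes_dvd_imp_eq s(1) assms by blast
    then show "s \<in> p ` {..<n}" using i by auto
  qed
  then have "card (prime_factors (\<Prod>i<n. p i)) \<le> card (p ` {..<n})" by (simp add: card_mono)
  also have "\<dots> \<le> n" using card_image_le[of "{..<n}" p] by simp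
  finally show ?thesis .
qed

lemma sqf_prod:
  fixes p :: "nat \<Rightarrow> nat"
  assumes "\<forall>i<n. prime (p i)" "inj_on p {..<n}"
  shows "squarefree (\<Prod>i<n. p i)"
  by (rule squarefree_prod_coprime) (use assms in \<open>auto intro: primes_coprime squarefree_prime dest: inj_onD\<close>)


lemma (in group) sub_card_dvd:
  assumes "finite (carrier G)" "subgroup S G" "subgroup T G" "S \<subseteq> T"
  shows "card S dvd card T"
proof -
  have gT: "group (G\<lparr>carrier := T\<rparr>)" using subgroup.subgroup_is_group[OF assms(3) is_group] .
  have "subgroup S (G\<lparr>carrier := T\<rparr>)" using subgroup_incl[OF assms(2,3,4)] .
  then have "card (rcosets\<^bsub>G\<lparr>carrier := T\<rparr>\<^esub> S) * card S = card T"
    using group.lagrange[OF gT] by (simp add: order_def)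
  then show ?thesis by (metis dvd_triv_right)
qed

locale ybe_main = ybe_reg +
  fixes n N :: nat
  assumes En: "E n = X \<times> X"
    and Estrict: "\<And>k. k < n \<Longrightarrow> E k \<noteq> E (Suc k)"
    and cardX: "card X = N"
    and sqN: "squarefree N"
    and pfN: "card (prime_factors N) \<le> n"
    and n3: "n \<ge> 3"
begin

lemma orbit_bij: "bij_betw (\<lambda>g. g x0) GS X"
  unfolding bij_betw_def
proof
  show "inj_on (\<lambda>g. g x0) GS" using reg by (auto intro: inj_onI)
  show "(\<lambda>g. g x0) ` GS = X"
  proof
    show "(\<lambda>g. g x0) ` GS \<subseteq> X" using GS_app x0 by auto
    show "X \<subseteq> (\<lambda>g. g x0) ` GS"
    proof
      fix y assume "y \<in> X"
      then obtain g where "g \<in> GS" "g x0 = y" using trans by blast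
      then show "y \<in> (\<lambda>g. g x0) ` GS" by (metis image_eqI)
    qed
  qed
qed

lemma cardGS: "card GS = N" using bij_betw_same_card[OF orbit_bij] cardX by simp

lemma finGS: "finite GS"
  using bij_betw_finite[OF orbit_bij] finX by simp

lemma Hn: "Hs n = GS" unfolding Hs_def using En GS_app x0 by auto

lemma H0: "Hs 0 = {\<one>\<^bsub>BG\<^esub>}"
proof
  show "Hs 0 \<subseteq> {\<one>\<^bsub>BG\<^esub>}"
  proof
    fix g assume "g \<in> Hs 0"
    then have g: "g \<in> GS" "g x0 = x0" unfolding Hs_def by (auto simp: Id_on_def)
    then have "g x0 = \<one>\<^bsub>BG\<^esub> x0" using app_one x0 by simp
    then show "g \<in> {\<one>\<^bsub>BG\<^esub>}" using reg[OF g(1) GS_one] by simp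
  qed
  show "{\<one>\<^bsub>BG\<^esub>} \<subseteq> Hs 0" unfolding Hs_def using GS_one app_one x0 by (auto simp: Id_on_def)
qed

lemma Hmono: "Hs j \<subseteq> Hs (Suc j)" unfolding Hs_def using E_mono by auto

lemma Kmono: "Ks j \<subseteq> Ks (Suc j)" unfolding Ks_def using E_mono by blast

lemma Hstrict: "j < n \<Longrightarrow> Hs j \<noteq> Hs (Suc j)"
proof
  assume j: "j < n" and eq: "Hs j = Hs (Suc j)"
  have "E (Suc j) \<subseteq> E j"
  proof
    fix p assume pE: "p \<in> E (Suc j)"
    obtain x y where p: "p = (x, y)" by (cases p)
    have xy: "(x, y) \<in> E (Suc j)" using pE p by simp
    then have xX: "x \<in> X" and yX: "y \<in> X" using E_memD by blast+
    obtain g where g: "g \<in> GS" "g x0 = x" using trans xX by blast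
    obtain h where h: "h \<in> GS" "h x0 = y" using trans yX by blast
    define u where "u = inv\<^bsub>BG\<^esub> g \<otimes>\<^bsub>BG\<^esub> h"
    have uG: "u \<in> GS" unfolding u_def using g h GS_mult GS_inv by simp
    have ux: "u x0 = (inv\<^bsub>BG\<^esub> g) y" unfolding u_def using GS_app_mult[OF GS_inv[OF g(1)] h(1) x0] h by simp
    have "((inv\<^bsub>BG\<^esub> g) x, (inv\<^bsub>BG\<^esub> g) y) \<in> E (Suc j)" using E_GS[OF GS_inv[OF g(1)] xy] .
    then have "(x0, u x0) \<in> E (Suc j)" using ux GS_inv_app[OF g(1) x0] g(2) by simp
    then have "u \<in> Hs (Suc j)" unfolding Hs_def using uG E_sym by blast
    then have "(u x0, x0) \<in> E j" using eq unfolding Hs_def by blast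
    then have "(g (u x0), g x0) \<in> E j" using E_GS[OF g(1)] by blast
    then have "(y, x) \<in> E j" using ux GS_app_inv[OF g(1) yX] g(2) by simp
    then show "p \<in> E j" using p E_sym by blast
  qed
  then have "E j = E (Suc j)" using E_mono by blast
  then show False using Estrict[OF j] by simp
qed

lemma Kn: "Ks n = GS" unfolding Ks_def using En GS_app by auto

lemma Hs_RA: "b \<in> GS \<Longrightarrow> b \<in> Hs (Suc j) \<longleftrightarrow> (Ks j #>\<^bsub>GG\<^esub> f \<one>\<^bsub>BG\<^esub> = Ks j #>\<^bsub>GG\<^esub> f b)"
  unfolding Hs_def using RA[OF GS_one, of b j] app_one x0 E_sym by auto

lemma Kstrict: "Suc j < n \<Longrightarrow> Ks j \<noteq> Ks (Suc j)"
proof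
  assume j: "Suc j < n" and eq: "Ks j = Ks (Suc j)"
  have "Hs (Suc j) = Hs (Suc (Suc j))"
  proof
    show "Hs (Suc j) \<subseteq> Hs (Suc (Suc j))" using Hmono by blast
    show "Hs (Suc (Suc j)) \<subseteq> Hs (Suc j)"
    proof
      fix b assume b: "b \<in> Hs (Suc (Suc j))"
      then have bG: "b \<in> GS" unfolding Hs_def by simp
      then show "b \<in> Hs (Suc j)" using b Hs_RA[OF bG, of j] Hs_RA[OF bG, of "Suc j"] eq by simp
    qed
  qed
  then show False using Hstrict j by simp
qed

end

context ybe_main begin

abbreviation hs where "hs j \<equiv> card (Hs j)"
abbreviation ks where "ks j \<equiv> card (Ks j)"

lemma finGG: "finite (carrier GG)" using finGS by simp

lemma Ks_subgroup: "subgroup (Ks j) GG" using normal_imp_subgroup[OF Ks_normal] .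

lemma hs_dvd: "hs j dvd hs (Suc j)"
  using group.sub_card_dvd[OF grpGG finGG Hs_subgroup Hs_subgroup Hmono] .

lemma ks_dvd: "ks j dvd ks (Suc j)"
  using group.sub_card_dvd[OF grpGG finGG Ks_subgroup Ks_subgroup Kmono] .

lemma hs_N: "hs j dvd N"
proof -
  have "subgroup GS GG" using group.subgroup_self[OF grpGG] by simp
  then have "hs j dvd card GS"
    using group.sub_card_dvd[OF grpGG finGG Hs_subgroup] Hs_def by auto
  then show ?thesis using cardGS by simp
qed

lemma ks_hs: "ks j dvd hs j"
  using group.sub_card_dvd[OF grpGG finGG Ks_subgroup Hs_subgroup Ks_sub_Hs] .

lemma finHs: "finite (Hs j)" using finGS unfolding Hs_def by simp
lemma finKs: "finite (Ks j)" using finGS unfolding Ks_def by simp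

lemma hs_ne: "j < n \<Longrightarrow> hs j \<noteq> hs (Suc j)"
proof
  assume j: "j < n" and eq: "hs j = hs (Suc j)"
  have "Hs j = Hs (Suc j)" using card_subset_eq[OF finHs Hmono] eq by simp
  then show False using Hstrict[OF j] by simp
qed

lemma ks_ne: "Suc j < n \<Longrightarrow> ks j \<noteq> ks (Suc j)"
proof
  assume j: "Suc j < n" and eq: "ks j = ks (Suc j)"
  have "Ks j = Ks (Suc j)" using card_subset_eq[OF finKs Kmono] eq by simp
  then show False using Kstrict[OF j] by simp
qed

lemma hs_n: "hs n = N" using Hn cardGS by simp
lemma hs_0: "hs 0 = 1" using H0 by simp

lemma omega_hs: "j \<le> n \<Longrightarrow> card (prime_factors (hs j)) = j"
proof -
  assume j: "j \<le> n"
  have "card (prime_factors (hs 0)) + (j - 0) \<le> card (prime_factors (hs j))"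
    using pf_chain[of n hs N 0 j, OF hs_dvd hs_ne _ sqN _ j] hs_n by simp
  then have a: "j \<le> card (prime_factors (hs j))" using hs_0 by simp
  have "card (prime_factors (hs j)) + (n - j) \<le> card (prime_factors (hs n))"
    using pf_chain[of n hs N j n, OF hs_dvd hs_ne _ sqN j] hs_n by simp
  then have "card (prime_factors (hs j)) + (n - j) \<le> n" using hs_n pfN by simp
  then show ?thesis using a j by simp
qed

lemma KH: "j \<le> n - 1 \<Longrightarrow> Ks j = Hs j"
proof -
  assume j: "j \<le> n - 1"
  have "card (prime_factors (ks 0)) + (j - 0) \<le> card (prime_factors (ks j))"
  proof (rule pf_chain[of "n - 1" ks N 0 j])
    show "\<And>i. i < n - 1 \<Longrightarrow> ks i dvd ks (Suc i)" using ks_dvd by blast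
    show "\<And>i. i < n - 1 \<Longrightarrow> ks i \<noteq> ks (Suc i)" using ks_ne by simp
    show "ks (n - 1) dvd N" using ks_hs hs_N dvd_trans by blast
  qed (use sqN j in auto)
  then have a: "j \<le> card (prime_factors (ks j))" by simp
  have b: "card (prime_factors (hs j)) = j" using omega_hs j by simp
  have "ks j = hs j"
  proof (rule ccontr)
    assume "ks j \<noteq> hs j"
    then have "prime_factors (ks j) \<subset> prime_factors (hs j)" using pf_strict[OF sqN ks_hs hs_N] by simp
    then have "card (prime_factors (ks j)) < card (prime_factors (hs j))"
      by (rule psubset_card_mono[rotated]) simp
    then show False using a b by simp
  qed
  then show ?thesis using card_subset_eq[OF finHs Ks_sub_Hs] by simp
qed

end

context ybe_main begin

lemma step_prime:
  assumes "Suc j \<le> n"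
  obtains t where "hs (Suc j) = hs j * t" "prime t"
proof -
  obtain t where t: "hs (Suc j) = hs j * t" using hs_dvd by (auto elim: dvdE)
  have "card (prime_factors (hs (Suc j))) = card (prime_factors (hs j)) + 1"
    using omega_hs assms by simp
  then have "prime t" using prime_quot[OF sqN t hs_N] by simp
  then show ?thesis using t that by blast
qed

theorem contradiction: False
proof -
  define m where "m = n - 3"
  have m3: "Suc (Suc (Suc m)) = n" unfolding m_def using n3 by simp
  define K where "K = Ks m"
  define P where "P = Ks (Suc m)"
  define A where "A = Ks (Suc (Suc m))"
  have KHm: "Ks m = Hs m" using KH m3 by simp
  have KH1: "Ks (Suc m) = Hs (Suc m)" using KH m3 by simp
  have KH2: "Ks (Suc (Suc m)) = Hs (Suc (Suc m))" using KH m3 by simp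
  have s1: "Suc m \<le> n" and s2: "Suc (Suc m) \<le> n" and s3: "Suc (Suc (Suc m)) \<le> n" using m3 by simp_all
  obtain p' where p': "hs (Suc m) = hs m * p'" "prime p'" by (rule step_prime[OF s1])
  obtain q' where q': "hs (Suc (Suc m)) = hs (Suc m) * q'" "prime q'" by (rule step_prime[OF s2])
  obtain rr where rr0: "hs (Suc (Suc (Suc m))) = hs (Suc (Suc m)) * rr" "prime rr" by (rule step_prime[OF s3])
  have rr: "hs n = hs (Suc (Suc m)) * rr" "prime rr" using rr0 m3 by simp_all
  have cP: "card P = p' * card K" unfolding P_def K_def KH1 KHm using p' by simp
  have cA: "card A = q' * card P" unfolding A_def P_def KH2 KH1 using q' by simp
  have cG: "card (carrier GG) = rr * card A" unfolding A_def KH2 using rr cardGS hs_n by simp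
  have "hs (Suc (Suc m)) = (p' * q') * hs m" using p'(1) q'(1) by simp
  then have "p' * q' dvd N" using hs_N[of "Suc (Suc m)"] dvd_trans dvd_triv_left by metis
  then have cpq: "coprime p' q'" using sqf_coprime[OF sqN] by simp
  have "N = hs (Suc m) * (q' * rr)" using hs_n rr(1) q'(1) by (simp add: mult.assoc)
  then have "q' * rr dvd N" by simp
  then have cqr: "coprime q' rr" using sqf_coprime[OF sqN] by simp
  have qpos: "q' > 0" using q'(2) prime_gt_0_nat by blast
  have fF: "f \<in> carrier GG \<rightarrow> carrier GG" using f_GS by auto
  have h1: "\<And>a b. a \<in> carrier GG \<Longrightarrow> b \<in> carrier GG \<Longrightarrow>
      f a \<otimes>\<^bsub>GG\<^esub> f (inv\<^bsub>GG\<^esub> (f a) \<otimes>\<^bsub>GG\<^esub> b) = f b \<otimes>\<^bsub>GG\<^esub> f (inv\<^bsub>GG\<^esub> (f b) \<otimes>\<^bsub>GG\<^esub> a)"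
    using h1_GG by simp
  have h2: "\<And>a b. a \<in> carrier GG \<Longrightarrow> b \<in> carrier GG \<Longrightarrow>
      (K #>\<^bsub>GG\<^esub> f a = K #>\<^bsub>GG\<^esub> f b) \<longleftrightarrow> (P #>\<^bsub>GG\<^esub> a = P #>\<^bsub>GG\<^esub> b)"
    unfolding K_def P_def using RA RB[OF KH1] by simp
  have h3: "\<And>a b. a \<in> carrier GG \<Longrightarrow> b \<in> carrier GG \<Longrightarrow>
      (P #>\<^bsub>GG\<^esub> f a = P #>\<^bsub>GG\<^esub> f b) \<longleftrightarrow> (A #>\<^bsub>GG\<^esub> a = A #>\<^bsub>GG\<^esub> b)"
    unfolding A_def P_def using RA RB[OF KH2] by simp
  have h4: "\<And>a b. a \<in> carrier GG \<Longrightarrow> b \<in> carrier GG \<Longrightarrow> A #>\<^bsub>GG\<^esub> f a = A #>\<^bsub>GG\<^esub> f b"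
  proof -
    fix a b assume "a \<in> carrier GG" "b \<in> carrier GG"
    then have ab: "a \<in> GS" "b \<in> GS" by auto
    have "(a x0, b x0) \<in> E (Suc (Suc (Suc m)))" using m3 En GS_app ab x0 by simp
    then show "A #>\<^bsub>GG\<^esub> f a = A #>\<^bsub>GG\<^esub> f b" unfolding A_def using RA[OF ab] by simp
  qed
  have "\<exists>a0\<in>GS. f a0 \<notin> A"
  proof (rule ccontr)
    assume "\<not> ?thesis"
    then have allA: "\<And>a. a \<in> GS \<Longrightarrow> f a \<in> A" by blast
    have sAGG: "subgroup A GG" unfolding A_def using Ks_subgroup .
    have AGS: "A \<subseteq> GS" using subgroup.subset[OF sAGG] by simp
    have sA: "subgroup A BG"
    proof (rule group.subgroupI[OF grpBG])
      show "A \<subseteq> carrier BG" using AGS GS_Bij by (auto simp: BijGroup_def)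
      show "A \<noteq> {}" using subgroup.one_closed[OF sAGG] by blast
      show "\<And>a. a \<in> A \<Longrightarrow> inv\<^bsub>BG\<^esub> a \<in> A" using subgroup.m_inv_closed[OF sAGG] GG_inv AGS by fastforce
      show "\<And>a b. a \<in> A \<Longrightarrow> b \<in> A \<Longrightarrow> a \<otimes>\<^bsub>BG\<^esub> b \<in> A" using subgroup.m_closed[OF sAGG] by simp
    qed
    have "sh ` X \<subseteq> A"
    proof
      fix s assume "s \<in> sh ` X"
      then obtain x where x: "x \<in> X" "s = sh x" by blast
      obtain g where g: "g \<in> GS" "g x0 = x" using trans x(1) by blast
      then show "s \<in> A" using allA[OF g(1)] x unfolding f_def by simp
    qed
    then have "GS \<subseteq> A" unfolding GS_def' using group.generate_subgroup_incl[OF grpBG _ sA] by blast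
    then have "Hs (Suc (Suc m)) = Hs n" using AGS Hn KH2 unfolding A_def by simp
    then show False using Hstrict[of "Suc (Suc m)"] m3 by simp
  qed
  then obtain a0 where a0: "a0 \<in> carrier GG" "f a0 \<notin> A" by auto
  have nK: "K \<lhd> GG" unfolding K_def by (rule Ks_normal)
  have nP: "P \<lhd> GG" unfolding P_def by (rule Ks_normal)
  have nA: "A \<lhd> GG" unfolding A_def by (rule Ks_normal)
  have KP: "K \<subseteq> P" unfolding K_def P_def by (rule Kmono)
  have PA: "P \<subseteq> A" unfolding A_def P_def by (rule Kmono)
  show False
    using group.core[where G=GG and K=K and P=P and A=A and p=p' and q=q' and r=rr and f=f,
      OF grpGG finGG nK nP nA KP PA cP cA cG p'(2) cpq cqr qpos fF h1 h2 h3 h4 a0] .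
qed

end

lemma ret_rel_stable:
  assumes "ret_rel X r k = ret_rel X r (Suc k)"
  shows "ret_rel X r (k + j) = ret_rel X r k"
proof (induction j)
  case 0 then show ?case by simp
next
  case (Suc j)
  have "ret_rel X r (k + Suc j) = ret_rel X r (Suc k)"
    using Suc by simp
  then show ?case using assms by (rule trans[OF _ sym])
qed

theorem mainTheorem10:
  fixes X :: "'a set" and r :: "'a \<times> 'a \<Rightarrow> 'a \<times> 'a" and n :: nat and p :: "nat \<Rightarrow> nat"
  assumes "n > 2"
    and "\<forall>i<n. prime (p i)"
    and "inj_on p {..<n}"
    and "ybe_solution X r"
    and "ybe_indecomposable X r"
    and "multipermutation X r"
    and "card X = (\<Prod>i<n. p i)"
    and "mp_level X r n"
  shows "card (ybe_group X r) > (\<Prod>i<n. p i)"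
proof (rule ccontr)
  assume "\<not> card (ybe_group X r) > (\<Prod>i<n. p i)"
  then have cle: "card (ybe_group X r) \<le> (\<Prod>i<n. p i)" by simp
  define N where "N = (\<Prod>i<n. p i)"
  have sqN: "squarefree N" unfolding N_def using sqf_prod[OF assms(2,3)] .
  have pfN: "card (prime_factors N) \<le> n" unfolding N_def using pf_prod_card[OF assms(2)] .
  have N0: "N \<noteq> 0" using sqN not_squarefree_0 by metis
  have p0: "prime (p 0)" using assms(1,2) by simp
  have "p 0 dvd N" unfolding N_def using assms(1) by (intro dvd_prodI) auto
  then have N2: "N \<ge> 2" using dvd_imp_le[of "p 0" N] N0 prime_ge_2_nat[OF p0] by simp
  have cX: "card X = N" using assms(7) N_def by simp
  have finX: "finite X" using card_ge_0_finite[of X] cX N2 by simp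
  interpret F: ybe_fin X r using assms(4) finX by unfold_locales
  have "X \<noteq> {}" using cX N2 by auto
  then obtain x0 where x0: "x0 \<in> X" by blast
  have trans: "\<And>y. y \<in> X \<Longrightarrow> \<exists>g\<in>ybe_group X r. g x0 = y"
    using assms(5) x0 unfolding ybe_indecomposable_def by blast
  have finG: "finite (ybe_group X r)"
  proof (rule finite_subset)
    show "ybe_group X r \<subseteq> Pi\<^sub>E X (\<lambda>_. X)"
    proof
      fix g assume "g \<in> ybe_group X r"
      then have "g \<in> Bij X" by (rule F.GS_Bij)
      then show "g \<in> Pi\<^sub>E X (\<lambda>_. X)" using Bij_imp_funcset Bij_imp_extensional unfolding PiE_def by blast
    qed
    show "finite (Pi\<^sub>E X (\<lambda>_. X))" using finX by (simp add: finite_PiE)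
  qed
  have img: "(\<lambda>g. g x0) ` ybe_group X r = X"
  proof
    show "(\<lambda>g. g x0) ` ybe_group X r \<subseteq> X" using F.GS_Bij F.Bij_app x0 by blast
    show "X \<subseteq> (\<lambda>g. g x0) ` ybe_group X r"
    proof
      fix y assume "y \<in> X"
      then obtain g where "g \<in> ybe_group X r" "g x0 = y" using trans by blast
      then show "y \<in> (\<lambda>g. g x0) ` ybe_group X r" by (metis image_eqI)
    qed
  qed
  have "card X \<le> card (ybe_group X r)" using card_image_le[OF finG, of "\<lambda>g. g x0"] img by simp
  then have cG: "card (ybe_group X r) = N" using cle cX N_def by simp
  have "inj_on (\<lambda>g. g x0) (ybe_group X r)"
    using eq_card_imp_inj_on[OF finG, of "\<lambda>g. g x0"] img cG cX by simp
  then have reg: "\<And>g h. g \<in> ybe_group X r \<Longrightarrow> h \<in> ybe_group X r \<Longrightarrow> g x0 = h x0 \<Longrightarrow> g = h"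
    by (auto dest: inj_onD)
  interpret R: ybe_reg X r x0 using x0 trans reg by unfold_locales auto
  have rc: "ret_card X r n = 1" and rcne: "\<And>k. 1 \<le> k \<Longrightarrow> k < n \<Longrightarrow> ret_card X r k \<noteq> 1"
    using assms(8) unfolding mp_level_def by auto
  have En: "ret_rel X r n = X \<times> X"
  proof
    show "ret_rel X r n \<subseteq> X \<times> X" using F.E_sub .
    show "X \<times> X \<subseteq> ret_rel X r n"
    proof
      fix q assume "q \<in> X \<times> X"
      then obtain x y where xy: "q = (x, y)" "x \<in> X" "y \<in> X" by blast
      have "card (X // ret_rel X r n) = 1" using rc unfolding ret_card_def .
      then obtain C where C: "X // ret_rel X r n = {C}" using card_1_singletonE by blast
      have "ret_rel X r n `` {x} \<in> X // ret_rel X r n" using xy by (intro quotientI)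
      moreover have "ret_rel X r n `` {y} \<in> X // ret_rel X r n" using xy by (intro quotientI)
      ultimately have "ret_rel X r n `` {x} = ret_rel X r n `` {y}" using C by simp
      then have "(x, y) \<in> ret_rel X r n" using eq_equiv_class_iff[OF F.E_equiv xy(2,3)] by simp
      then show "q \<in> ret_rel X r n" using xy by simp
    qed
  qed
  have Estrict: "\<And>k. k < n \<Longrightarrow> ret_rel X r k \<noteq> ret_rel X r (Suc k)"
  proof
    fix k assume k: "k < n" and eq: "ret_rel X r k = ret_rel X r (Suc k)"
    have "ret_rel X r n = ret_rel X r k" using ret_rel_stable[OF eq, of "n - k"] k by simp
    show False
    proof (cases "k = 0")
      case True
      then have "X \<times> X = Id_on X" using En \<open>ret_rel X r n = ret_rel X r k\<close> by simp
      then have "X \<subseteq> {x0}" using x0 by (auto simp: Id_on_def)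
      then have "card X \<le> 1" using card_mono[of "{x0}" X] by simp
      then show False using cX N2 by simp
    next
      case False
      then have "ret_card X r k = 1" using rc \<open>ret_rel X r n = ret_rel X r k\<close> unfolding ret_card_def by simp
      then show False using rcne[of k] k False by simp
    qed
  qed
  interpret M: ybe_main X r x0 n N
    using En Estrict cX sqN pfN assms(1) by unfold_locales auto
  show False by (rule M.contradiction)
qed


end
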